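(* Let $\mathfrak{n}\in A_+$. If $f\in\mathcal{H}(\mathfrak{n})$ satisfies $c_\mathfrak{m}(f)=0$ for all $\mathfrak{m}\in A_+$ with $\deg\mathfrak{m}<\deg\mathfrak{n}$, then $c_0(f)=0$.
   Context: $\mathbb{F}_q$ finite field with $q$ elements and characteristic $p$; $K=\mathbb{F}_q(\theta)$, $A=\mathbb{F}_q[\theta]$, $A_+$ the monic polynomials; $|x|_\infty=q^{\deg a-\deg b}$ for $x=a/b$; $\pi_\infty=\theta^{-1}$, $K_\infty=\mathbb{F}_q((\pi_\infty))$, $O_\infty=\mathbb{F}_q[[\pi_\infty]]$, $\mathcal{I}_\infty$ the matrices in $\mathrm{GL}_2(O_\infty)$ with lower-left entry in $\pi_\infty O_\infty$. Bruhat–Tits tree $\mathscr{T}$: vertices $\mathrm{GL}_2(K_\infty)/K_\infty^\times\mathrm{GL}_2(O_\infty)$, oriented edges $E(\mathscr{T})=\mathrm{GL}_2(K_\infty)/K_\infty^\times\mathcal{I}_\infty$; edge $e_g$ has origin $gK_\infty^\times\mathrm{GL}_2(O_\infty)$ and opposite $\bar e_g=e_{g\begin{pmatrix}0&1\\\pi_\infty&0\end{pmatrix}}$; left action of $\mathrm{GL}_2(K_\infty)$. $\Gamma_0(\mathfrak{n})=\{\begin{pmatrix}a&b\\c&d\end{pmatrix}\in\mathrm{GL}_2(A):\mathfrak{n}\mid c\}$. Harmonic cochain: $f:E(\mathscr{T})\to\mathbb{C}$ with $f(\bar e)=-f(e)$ and $\sum_{o(e)=v}f(e)=0$ for all vertices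 $v$. $\mathcal{H}(\mathfrak{n})$: $\Gamma_0(\mathfrak{n})$-invariant harmonic cochains. With $f(g)=f(e_g)$, $\psi(\sum a_n\pi_\infty^n)=\exp(2\pi\sqrt{-1}\,\mathrm{Tr}_{\mathbb{F}_q/\mathbb{F}_p}(a_1)/p)$, $f^*(r,m)=\int_{A\backslash K_\infty}f\begin{pmatrix}\pi_\infty^r&u\\0&1\end{pmatrix}\psi(-mu)\,du$ (Haar measure of total mass 1); $c_0(f)=f^*(2,0)$ and $c_\mathfrak{m}(f)=|\mathfrak{m}|_\infty f^*(\deg\mathfrak{m}+2,\mathfrak{m})$ for $\mathfrak{m}\in A_+$. *)

theory Defs
  imports "HOL-Analysis.Analysis" "HOL-Computational_Algebra.Polynomial"
          "HOL-Computational_Algebra.Formal_Laurent_Series"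
begin

text \<open>Setting: 'k is the finite field F_q. K_inf = F_q((pi)) is modelled by 'k fls,
  with pi_inf = fls_X and theta = fls_X_inv.  A = F_q[theta] is modelled by 'k poly.\<close>

datatype 'a mat2 = M2 'a 'a 'a 'a

fun mmul :: "'a::comm_ring_1 mat2 \<Rightarrow> 'a mat2 \<Rightarrow> 'a mat2" where
  "mmul (M2 a b c d) (M2 a' b' c' d') =
     M2 (a*a' + b*c') (a*b' + b*d') (c*a' + d*c') (c*b' + d*d')"

fun mdet :: "'a::comm_ring_1 mat2 \<Rightarrow> 'a" where
  "mdet (M2 a b c d) = a*d - b*c"

fun entries :: "'a mat2 \<Rightarrow> 'a set" where
  "entries (M2 a b c d) = {a,b,c,d}"

definition Oinf :: "'k::field fls set" where
  "Oinf = {x. 0 \<le> fls_subdegree x}"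
definition piOinf :: "'k::field fls set" where
  "piOinf = {x. x = 0 \<or> 1 \<le> fls_subdegree x}"
definition Ounits :: "'k::field fls set" where
  "Ounits = {x. x \<noteq> 0 \<and> fls_subdegree x = 0}"

definition GL2K :: "'k::field fls mat2 set" where
  "GL2K = {g. mdet g \<noteq> 0}"
definition GL2O :: "'k::field fls mat2 set" where
  "GL2O = {g. entries g \<subseteq> Oinf \<and> mdet g \<in> Ounits}"
definition Iwahori :: "'k::field fls mat2 set" where
  "Iwahori = {g. g \<in> GL2O \<and> (case g of M2 a b c d \<Rightarrow> c \<in> piOinf)}"
definition scalars :: "'k::field fls mat2 set" where
  "scalars = {M2 z 0 0 z | z. z \<noteq> 0}"

definition edgeOf :: "'k::field fls mat2 \<Rightarrow> 'k fls mat2 set" where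
  "edgeOf g = {x. \<exists>z k. z \<in> scalars \<and> k \<in> Iwahori \<and> x = mmul g (mmul z k)}"
definition vertexOf :: "'k::field fls mat2 \<Rightarrow> 'k fls mat2 set" where
  "vertexOf g = {x. \<exists>z k. z \<in> scalars \<and> k \<in> GL2O \<and> x = mmul g (mmul z k)}"
definition Edges :: "'k::field fls mat2 set set" where
  "Edges = edgeOf ` GL2K"
definition Vertices :: "'k::field fls mat2 set set" where
  "Vertices = vertexOf ` GL2K"
definition origin :: "'k::field fls mat2 set \<Rightarrow> 'k fls mat2 set" where
  "origin e = {y. \<exists>x k. x \<in> e \<and> k \<in> GL2O \<and> y = mmul x k}"
definition wmat :: "'k::field fls mat2" where
  "wmat = M2 0 1 fls_X 0"
definition opp :: "'k::field fls mat2 set \<Rightarrow> 'k fls mat2 set" where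
  "opp e = (\<lambda>x. mmul x wmat) ` e"
definition act :: "'k::field fls mat2 \<Rightarrow> 'k fls mat2 set \<Rightarrow> 'k fls mat2 set" where
  "act h e = (\<lambda>x. mmul h x) ` e"

definition emb :: "'k::field poly \<Rightarrow> 'k fls" where
  "emb a = (\<Sum>i\<le>degree a. fls_const (coeff a i) * fls_X_inv ^ i)"

fun memb :: "'k::field poly mat2 \<Rightarrow> 'k fls mat2" where
  "memb (M2 a b c d) = M2 (emb a) (emb b) (emb c) (emb d)"

definition Gamma0 :: "'k::field poly \<Rightarrow> 'k poly mat2 set" where
  "Gamma0 n = {M2 a b c d | a b c d. is_unit (a*d - b*c) \<and> n dvd c}"

text \<open>Harmonic cochains, Gamma_0(n)-invariant.  Values off Edges are irrelevant.\<close>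
definition harmonic :: "('k::{finite,field} fls mat2 set \<Rightarrow> complex) \<Rightarrow> bool" where
  "harmonic F \<longleftrightarrow>
     (\<forall>e\<in>Edges. F (opp e) = - F e) \<and>
     (\<forall>v\<in>Vertices. (\<Sum>e\<in>{e\<in>Edges. origin e = v}. F e) = 0)"

definition HH :: "'k::{finite,field} poly \<Rightarrow> ('k fls mat2 set \<Rightarrow> complex) set" where
  "HH n = {F. harmonic F \<and> (\<forall>\<gamma>\<in>Gamma0 n. \<forall>e\<in>Edges. F (act (memb \<gamma>) e) = F e)}"

definition ext_deg :: "'k::{finite,field} itself \<Rightarrow> nat" where
  "ext_deg _ = (THE r. CHAR('k) ^ r = CARD('k))"

definition tr :: "'k::{finite,field} \<Rightarrow> 'k" where
  "tr a = (\<Sum>i<ext_deg TYPE('k). a ^ (CHAR('k) ^ i))"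

definition tr_nat :: "'k::{finite,field} \<Rightarrow> nat" where
  "tr_nat a = (THE k. k < CHAR('k) \<and> of_nat k = tr a)"

definition psi :: "'k::{finite,field} fls \<Rightarrow> complex" where
  "psi x = cis (2 * pi * real (tr_nat (fls_nth x 1)) / real CHAR('k))"

text \<open>Haar integral (total mass 1) over A\K_inf of an A-periodic continuous function,
  as the limit of Riemann sums over the fundamental domain pi O_inf.\<close>
definition trunc_set :: "nat \<Rightarrow> 'k::{finite,field} fls set" where
  "trunc_set N = {u. \<forall>n. fls_nth u n \<noteq> 0 \<longrightarrow> 1 \<le> n \<and> n \<le> int N}"

definition haar :: "('k::{finite,field} fls \<Rightarrow> complex) \<Rightarrow> complex" where
  "haar h = lim (\<lambda>N. (\<Sum>u\<in>trunc_set N. h u) / of_nat (CARD('k) ^ N))"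

definition fval :: "('k::{finite,field} fls mat2 set \<Rightarrow> complex) \<Rightarrow> 'k fls mat2 \<Rightarrow> complex" where
  "fval F g = F (edgeOf g)"

definition fstar :: "('k::{finite,field} fls mat2 set \<Rightarrow> complex) \<Rightarrow> nat \<Rightarrow> 'k poly \<Rightarrow> complex" where
  "fstar F r m = haar (\<lambda>u. fval F (M2 (fls_X ^ r) u 0 1) * psi (- (emb m * u)))"

definition c0 :: "('k::{finite,field} fls mat2 set \<Rightarrow> complex) \<Rightarrow> complex" where
  "c0 F = fstar F 2 0"

definition cm :: "('k::{finite,field} fls mat2 set \<Rightarrow> complex) \<Rightarrow> 'k poly \<Rightarrow> complex" where
  "cm F m = of_nat (CARD('k) ^ degree m) * fstar F (degree m + 2) m"

end

theory Submission
  imports Defs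
begin


section \<open>Finite field facts\<close>

lemma char_prime: "prime CHAR('k::{finite,field})"
  using finite_imp_CHAR_pos[OF finite] prime_CHAR_semidom by blast

lemma char_gt1: "CHAR('k::{finite,field}) > 1"
  using char_prime[where 'k='k] prime_gt_1_nat by blast

lemma card_ge2: "CARD('k::{finite,field}) \<ge> 2"
proof -
  have "{0::'k, 1} \<subseteq> UNIV" by simp
  hence "card {0::'k,1} \<le> CARD('k)" by (intro card_mono) auto
  thus ?thesis by simp
qed

lemma ff_power_card: "(x::'k::{finite,field}) ^ CARD('k) = x"
proof (cases "x = 0")
  case False
  have "x * (\<Prod>y\<in>UNIV-{0}. x * y) = x * x ^ (CARD('k) - 1) * \<Prod>(UNIV-{0})"
    by (simp add: prod.distrib mult_ac)
  also have "x * x ^ (CARD('k) - 1) = x ^ Suc (CARD('k) - 1)"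
    by (subst power_Suc) auto
  also have "Suc (CARD('k) - 1) = CARD('k)"
    using card_ge2[where 'k='k] by simp
  also have "(\<Prod>y\<in>UNIV-{0}. x * y) = (\<Prod>y\<in>UNIV-{0}. y)"
    by (rule prod.reindex_bij_witness[of _ "\<lambda>y. y / x" "\<lambda>y. x * y"]) (use False in auto)
  finally show ?thesis
    by simp
qed (use card_ge2[where 'k='k] in auto)

definition Fp :: "'k::{finite,field} set" where "Fp = range of_nat"

lemma of_nat_mod_char: "(of_nat (n mod CHAR('k)) :: 'k::{finite,field}) = of_nat n"
proof -
  have "n = n mod CHAR('k) + CHAR('k) * (n div CHAR('k))" by simp
  hence "(of_nat n::'k) = of_nat (n mod CHAR('k)) + of_nat CHAR('k) * of_nat (n div CHAR('k))"
    by (metis of_nat_add of_nat_mult)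
  thus ?thesis by simp
qed

lemma of_nat_inj_char:
  assumes "m < CHAR('k::{finite,field})" "n < CHAR('k)" "(of_nat m :: 'k) = of_nat n"
  shows "m = n"
proof (rule ccontr)
  assume ne: "m \<noteq> n"
  show False
  proof (cases "m < n")
    case True
    hence "CHAR('k) dvd n - m" using of_nat_eq_iff_char_dvd[of m n, where 'a='k] assms by simp
    moreover have "0 < n - m" "n - m < CHAR('k)" using True assms by auto
    ultimately show False using nat_dvd_not_less by blast
  next
    case False
    hence "n < m" using ne by simp
    hence "CHAR('k) dvd m - n" using of_nat_eq_iff_char_dvd[of n m, where 'a='k] assms by simp
    moreover have "0 < m - n" "m - n < CHAR('k)" using \<open>n<m\<close> assms by auto
    ultimately show False using nat_dvd_not_less by blast
  qed
qed

lemma Fp_eq: "(Fp :: 'k::{finite,field} set) = of_nat ` {..<CHAR('k)}"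
proof
  show "(Fp::'k set) \<subseteq> of_nat ` {..<CHAR('k)}"
  proof
    fix x :: 'k assume "x \<in> Fp"
    then obtain n where "x = of_nat n" by (auto simp: Fp_def)
    hence "x = of_nat (n mod CHAR('k))" by (simp add: of_nat_mod_char)
    moreover have "n mod CHAR('k) < CHAR('k)" using char_gt1[where 'k='k] by simp
    ultimately show "x \<in> of_nat ` {..<CHAR('k)}" by blast
  qed
qed (auto simp: Fp_def)

lemma card_Fp: "card (Fp :: 'k::{finite,field} set) = CHAR('k)"
proof -
  have "inj_on (of_nat :: nat \<Rightarrow> 'k) {..<CHAR('k)}"
    by (auto intro!: inj_onI of_nat_inj_char)
  thus ?thesis by (simp add: Fp_eq card_image)
qed

lemma Fp_of_nat [simp]: "of_nat n \<in> Fp" by (simp add: Fp_def)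
lemma Fp_0 [simp]: "0 \<in> Fp" using Fp_of_nat[of 0] by simp
lemma Fp_1 [simp]: "1 \<in> Fp" using Fp_of_nat[of 1] by simp
lemma Fp_add: "a \<in> Fp \<Longrightarrow> b \<in> Fp \<Longrightarrow> a + b \<in> Fp"
  by (auto simp: Fp_def) (metis of_nat_add rangeI)
lemma Fp_mult: "a \<in> Fp \<Longrightarrow> b \<in> Fp \<Longrightarrow> a * b \<in> Fp"
  by (auto simp: Fp_def) (metis of_nat_mult rangeI)
lemma Fp_minus1: "(-1::'k::{finite,field}) \<in> Fp"
proof -
  have c: "CHAR('k) = Suc (CHAR('k) - 1)" using char_gt1[where 'k='k] by simp
  have "(of_nat (CHAR('k) - 1) :: 'k) + 1 = of_nat (Suc (CHAR('k) - 1))"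
    by simp
  hence "(of_nat (CHAR('k) - 1) :: 'k) + 1 = of_nat CHAR('k)" using c by metis
  hence "(of_nat (CHAR('k) - 1) :: 'k) = -1" by (simp add: eq_neg_iff_add_eq_0)
  thus ?thesis by (metis Fp_of_nat)
qed
lemma Fp_uminus: "a \<in> Fp \<Longrightarrow> - a \<in> (Fp::'k::{finite,field} set)"
  using Fp_mult[OF Fp_minus1] by fastforce
lemma Fp_diff: "a \<in> Fp \<Longrightarrow> b \<in> Fp \<Longrightarrow> a - b \<in> (Fp::'k::{finite,field} set)"
  using Fp_add[OF _ Fp_uminus] by (metis diff_conv_add_uminus)
lemma Fp_power: "a \<in> Fp \<Longrightarrow> a ^ n \<in> Fp"
  by (induction n) (auto intro: Fp_mult)
lemma Fp_inverse:
  assumes "(a::'k::{finite,field}) \<in> Fp"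
  shows "inverse a \<in> Fp"
proof (cases "a = 0")
  case False
  have "a * a ^ (CARD('k) - 2) = a ^ Suc (CARD('k) - 2)" by (rule power_Suc[symmetric])
  also have "Suc (CARD('k) - 2) = CARD('k) - 1" using card_ge2[where 'k='k] by simp
  finally have e: "a * a ^ (CARD('k) - 2) = a ^ (CARD('k) - 1)" .
  have c: "CARD('k) = Suc (CARD('k) - 1)" using card_ge2[where 'k='k] by simp
  have "a * a ^ (CARD('k) - 1) = a ^ Suc (CARD('k) - 1)" by (rule power_Suc[symmetric])
  moreover have "a ^ CARD('k) = a ^ Suc (CARD('k) - 1)" using c by (rule arg_cong)
  ultimately have "a * a ^ (CARD('k) - 1) = a ^ CARD('k)" by (rule trans[OF _ sym])
  hence "a * a ^ (CARD('k) - 1) = a * 1" using ff_power_card[of a] by simp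
  hence "a ^ (CARD('k) - 1) = 1" using False by simp
  hence "inverse a = a ^ (CARD('k) - 2)" using e False by (metis inverse_unique)
  thus ?thesis using Fp_power[OF assms] by simp
qed simp

definition Fsub :: "'k::{finite,field} set \<Rightarrow> bool" where
  "Fsub S \<longleftrightarrow> 0 \<in> S \<and> (\<forall>x\<in>S. \<forall>y\<in>S. x + y \<in> S) \<and> (\<forall>c\<in>Fp. \<forall>x\<in>S. c * x \<in> S)"

lemma Fsub_grow:
  fixes S :: "'k::{finite,field} set"
  assumes "Fsub S" "x \<notin> S"
  defines "S' \<equiv> (\<lambda>(s,c). s + c * x) ` (S \<times> Fp)"
  shows "Fsub S'" "card S' = card S * CHAR('k)" "S \<subseteq> S'" "x \<in> S'"
proof -
  have S0: "0 \<in> S" and Sadd: "\<And>a b. a \<in> S \<Longrightarrow> b \<in> S \<Longrightarrow> a + b \<in> S"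
    and Ssc: "\<And>(c::'k) a. c \<in> Fp \<Longrightarrow> a \<in> S \<Longrightarrow> c * a \<in> S" using assms(1) by (auto simp: Fsub_def)
  show "Fsub S'"
    unfolding Fsub_def S'_def
  proof (intro conjI ballI)
    show "0 \<in> (\<lambda>(s, c). s + c * x) ` (S \<times> Fp)"
      using S0 by (intro image_eqI[of _ _ "(0,0)"]) auto
  next
    fix a b assume "a \<in> (\<lambda>(s, c). s + c * x) ` (S \<times> Fp)" "b \<in> (\<lambda>(s, c). s + c * x) ` (S \<times> Fp)"
    then obtain s1 c1 s2 c2 where "s1 \<in> S" "c1 \<in> Fp" "s2 \<in> S" "c2 \<in> Fp" "a = s1 + c1 * x" "b = s2 + c2 * x"
      by auto
    thus "a + b \<in> (\<lambda>(s, c). s + c * x) ` (S \<times> Fp)"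
      by (intro image_eqI[of _ _ "(s1+s2, c1+c2)"]) (auto simp: algebra_simps intro: Sadd Fp_add)
  next
    fix c :: 'k and a assume "c \<in> Fp" "a \<in> (\<lambda>(s, c). s + c * x) ` (S \<times> Fp)"
    then obtain s1 c1 where h: "s1 \<in> S" "c1 \<in> Fp" "a = s1 + c1 * x" by auto
    have "c * a = (\<lambda>(s, c). s + c * x) (c * s1, c * c1)" using h by (simp add: algebra_simps)
    moreover have "(c * s1, c * c1) \<in> S \<times> Fp" using h \<open>c \<in> Fp\<close> by (auto intro: Ssc Fp_mult)
    ultimately show "c * a \<in> (\<lambda>(s, c). s + c * x) ` (S \<times> Fp)" by (rule image_eqI)
  qed
  have inj: "inj_on (\<lambda>(s,c). s + c * x) (S \<times> Fp)"
  proof (rule inj_onI, clarify)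
    fix s1 c1 s2 c2 assume h: "s1 \<in> S" "c1 \<in> Fp" "s2 \<in> S" "c2 \<in> Fp" "s1 + c1 * x = s2 + c2 * x"
    show "s1 = s2 \<and> c1 = c2"
    proof (cases "c1 = c2")
      case True thus ?thesis using h by simp
    next
      case False
      have ne: "c1 - c2 \<noteq> 0" using False by simp
      have e1: "(c1 - c2) * x = s2 + (-1) * s1" using h(5) by (simp add: algebra_simps)
      have "x = inverse (c1 - c2) * ((c1 - c2) * x)" using ne by (simp add: mult.assoc[symmetric])
      hence xe: "x = inverse (c1 - c2) * (s2 + (-1) * s1)" using e1 by simp
      have "s2 + (-1) * s1 \<in> S" using h by (intro Sadd Ssc Fp_minus1)
      moreover have "inverse (c1 - c2) \<in> Fp" using h Fp_inverse Fp_diff by blast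
      ultimately have "x \<in> S" using Ssc xe by simp
      thus ?thesis using assms(2) by simp
    qed
  qed
  show "card S' = card S * CHAR('k)"
    unfolding S'_def using card_image[OF inj] by (simp add: card_cartesian_product card_Fp)
  show "S \<subseteq> S'" unfolding S'_def
    by (auto intro!: image_eqI[where x="(s,0)" for s])
  show "x \<in> S'" unfolding S'_def using S0
    by (intro image_eqI[of _ _ "(0,1)"]) auto
qed

lemma card_prime_power_aux:
  "Fsub (S::'k::{finite,field} set) \<Longrightarrow> card S = CHAR('k) ^ j \<Longrightarrow> card (UNIV - S) = N
   \<Longrightarrow> \<exists>r. CARD('k) = CHAR('k) ^ r"
proof (induction N arbitrary: S j rule: less_induct)
  case (less N)
  show ?case
  proof (cases "S = UNIV")
    case True
    have "CARD('k) = CHAR('k) ^ j" using less.prems(2) True by simp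
    thus ?thesis by blast
  next
    case False
    then obtain x where x: "x \<notin> S" by auto
    define S' where "S' = (\<lambda>(s,c). s + c * x) ` (S \<times> Fp)"
    note g = Fsub_grow[OF less.prems(1) x, folded S'_def]
    have lt: "card (UNIV - S') < card (UNIV - S)"
      using g(3,4) x by (intro psubset_card_mono) auto
    have lt': "card (UNIV - S') < N" using lt less.prems(3) by simp
    have cS: "card S' = CHAR('k) ^ Suc j" unfolding power_Suc2 less.prems(2)[symmetric] by (rule g(2))
    show ?thesis by (rule less.IH[OF lt' g(1) cS refl])
  qed
qed

lemma card_prime_power: "\<exists>r. CARD('k::{finite,field}) = CHAR('k) ^ r"
proof -
  have "Fsub {0::'k}" by (auto simp: Fsub_def)
  thus ?thesis using card_prime_power_aux[of "{0::'k}" 0] by auto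
qed

lemma ext_deg_eq: "CHAR('k::{finite,field}) ^ ext_deg TYPE('k) = CARD('k)"
proof -
  obtain r where r: "CARD('k) = CHAR('k) ^ r" using card_prime_power by blast
  have "\<exists>!r. CHAR('k) ^ r = CARD('k)"
    using r power_inject_exp[OF char_gt1[where 'k='k]] by auto
  thus ?thesis unfolding ext_deg_def by (rule theI')
qed

lemma ext_deg_pos: "ext_deg TYPE('k::{finite,field}) > 0"
  using ext_deg_eq[where 'k='k] card_ge2[where 'k='k] by (cases "ext_deg TYPE('k)") auto

lemma tr_add: "tr (a + b) = tr a + tr (b::'k::{finite,field})"
  unfolding tr_def
  by (simp add: freshmans_dream'[OF char_prime] sum.distrib)

lemma of_nat_power_char: "(of_nat k :: 'k::{finite,field}) ^ CHAR('k) = of_nat k"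
proof (induction k)
  case 0 thus ?case using char_gt1[where 'k='k] by simp
next
  case (Suc k)
  thus ?case by (simp add: freshmans_dream[OF char_prime])
qed

lemma fixed_in_Fp:
  assumes "(t::'k::{finite,field}) ^ CHAR('k) = t"
  shows "t \<in> Fp"
proof -
  define Q :: "'k poly" where "Q = monom 1 CHAR('k) - [:0,1:]"
  have cQ: "coeff Q CHAR('k) = 1" using char_gt1[where 'k='k] by (simp add: Q_def coeff_pCons')
  hence Q0: "Q \<noteq> 0" by auto
  have dQ: "degree Q \<le> CHAR('k)" unfolding Q_def
    using char_gt1[where 'k='k] by (intro degree_diff_le) (auto simp: degree_monom_le)
  have pQ: "poly Q x = x ^ CHAR('k) - x" for x by (simp add: Q_def poly_monom)
  have sub: "Fp \<subseteq> {x. poly Q x = 0}"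
    by (auto simp: Fp_def pQ of_nat_power_char)
  have fin: "finite {x. poly Q x = 0}" by simp
  have "card {x. poly Q x = 0} \<le> CHAR('k)" using card_poly_roots_bound[OF Q0] dQ by linarith
  hence "Fp = {x. poly Q x = 0}" using sub card_Fp[where 'k='k] card_mono[OF fin sub]
    by (intro card_subset_eq[OF fin sub]) linarith
  thus ?thesis using assms pQ by auto
qed

lemma tr_power_char: "tr (a::'k::{finite,field}) ^ CHAR('k) = tr a"
proof -
  let ?p = "CHAR('k)" and ?r = "ext_deg TYPE('k)"
  have "tr a ^ ?p = (\<Sum>i<?r. (a ^ (?p ^ i)) ^ ?p)"
    unfolding tr_def by (rule freshmans_dream_sum[OF char_prime refl])
  also have "\<dots> = (\<Sum>i<?r. a ^ (?p ^ Suc i))"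
    by (simp add: power_mult[symmetric] mult.commute)
  also have "\<dots> = (\<Sum>i<?r. a ^ (?p ^ i))"
  proof -
    have "(\<Sum>i<Suc ?r. a ^ (?p ^ i)) = a ^ (?p ^ 0) + (\<Sum>i<?r. a ^ (?p ^ Suc i))"
      by (rule sum.lessThan_Suc_shift)
    moreover have "(\<Sum>i<Suc ?r. a ^ (?p ^ i)) = (\<Sum>i<?r. a ^ (?p ^ i)) + a ^ (?p ^ ?r)"
      by simp
    moreover have "a ^ (?p ^ ?r) = a" using ff_power_card[of a] by (simp add: ext_deg_eq)
    ultimately show ?thesis by (simp add: add.commute)
  qed
  finally show ?thesis unfolding tr_def .
qed

lemma tr_nat_spec: "tr_nat (a::'k::{finite,field}) < CHAR('k) \<and> of_nat (tr_nat a) = tr a"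
proof -
  have "tr a \<in> Fp" by (rule fixed_in_Fp[OF tr_power_char])
  then obtain k where k: "k < CHAR('k)" "of_nat k = tr a" by (auto simp: Fp_eq)
  have "\<exists>!k. k < CHAR('k) \<and> (of_nat k :: 'k) = tr a"
    using k of_nat_inj_char[where 'k='k] by metis
  thus ?thesis unfolding tr_nat_def by (rule theI')
qed

lemma tr_nonzero_exists: "\<exists>a::'k::{finite,field}. tr a \<noteq> 0"
proof -
  let ?p = "CHAR('k)" and ?r = "ext_deg TYPE('k)"
  define T :: "'k poly" where "T = (\<Sum>i<?r. monom 1 (?p ^ i))"
  have pT: "poly T x = tr x" for x by (simp add: T_def poly_sum poly_monom tr_def)
  have r1: "?r - 1 < ?r" using ext_deg_pos[where 'k='k] by simp
  have "coeff T (?p ^ (?r - 1)) = (\<Sum>i<?r. if ?p ^ (?r - 1) = ?p ^ i then 1 else 0)"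
    by (simp add: T_def coeff_sum coeff_monom eq_commute)
  also have "\<dots> = (\<Sum>i\<in>{?r - 1}. 1)"
    using r1 power_inject_exp[OF char_gt1[where 'k='k]]
    by (intro sum.mono_neutral_cong_right) auto
  finally have "coeff T (?p ^ (?r - 1)) = 1" by simp
  hence T0: "T \<noteq> 0" by auto
  have dT: "degree T \<le> ?p ^ (?r - 1)" unfolding T_def
    by (intro degree_sum_le) (auto simp: degree_monom_le intro!: order.trans[OF degree_monom_le] power_increasing
       char_gt1[THEN less_imp_le])
  have "?p ^ (?r - 1) < ?p ^ ?r" using r1 char_gt1[where 'k='k] by (intro power_strict_increasing) auto
  hence "card {x. poly T x = 0} < CARD('k)" using card_poly_roots_bound[OF T0] dT ext_deg_eq[where 'k='k]
    by linarith
  hence "{x. poly T x = 0} \<noteq> UNIV" by auto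
  thus ?thesis using pT by auto
qed

definition Psi :: "'k::{finite,field} \<Rightarrow> complex" where
  "Psi a = cis (2 * pi * real (tr_nat a) / real CHAR('k))"

lemma psi_Psi: "psi x = Psi (fls_nth x 1)"
  by (simp add: psi_def Psi_def)

lemma Psi_add: "Psi (a + b) = Psi a * Psi (b::'k::{finite,field})"
proof -
  let ?p = "CHAR('k)"
  define s where "s = tr_nat a + tr_nat b"
  have "(of_nat (s mod ?p) :: 'k) = of_nat s" by (rule of_nat_mod_char)
  also have "\<dots> = tr (a + b)" using tr_nat_spec[of a] tr_nat_spec[of b] by (simp add: s_def tr_add)
  finally have "tr_nat (a + b) = s mod ?p"
    using tr_nat_spec[of "a+b"] char_gt1[where 'k='k] by (intro of_nat_inj_char[where 'k='k]) auto
  hence "Psi (a + b) = cis (2 * pi * real (s mod ?p) / real ?p)" by (simp add: Psi_def)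
  also have "\<dots> = cis (2 * pi * real (s mod ?p) / real ?p) * cis (2 * pi * real (s div ?p))"
    by (subst cis_multiple_2pi) auto
  also have "\<dots> = cis (2 * pi * real s / real ?p)"
  proof -
    have "real s = real (s mod ?p) + real ?p * real (s div ?p)"
      by (metis mod_mult_div_eq of_nat_add of_nat_mult)
    hence eq: "2 * pi * real s / real ?p = 2 * pi * real (s mod ?p) / real ?p + 2 * pi * real (s div ?p)"
      using char_gt1[where 'k='k] by (simp add: field_simps)
    show ?thesis by (simp only: cis_mult eq)
  qed
  also have "\<dots> = Psi a * Psi b"
  proof -
    have "Psi a * Psi b = cis (2 * pi * real (tr_nat a) / real ?p + 2 * pi * real (tr_nat b) / real ?p)"
      unfolding Psi_def by (rule cis_mult)
    moreover have "2 * pi * real (tr_nat a) / real ?p + 2 * pi * real (tr_nat b) / real ?p = 2 * pi * real s / real ?p"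
      unfolding s_def of_nat_add by (simp add: add_divide_distrib[symmetric] distrib_left)
    ultimately show ?thesis by simp
  qed
  finally show ?thesis .
qed

lemma Psi_0: "Psi (0::'k::{finite,field}) = 1"
proof -
  have h1: "Psi (0::'k) = Psi (0::'k) * Psi (0::'k)" using Psi_add[of "0::'k" 0] by (simp only: add_0_left)
  have nz: "Psi (0::'k) \<noteq> 0" by (simp add: Psi_def)
  have "Psi (0::'k) * 1 = Psi (0::'k) * Psi (0::'k)" by (subst mult_1_right) (rule h1)
  hence "1 = Psi (0::'k)" by (rule mult_left_cancel[THEN iffD1, OF nz])
  thus ?thesis by (rule sym)
qed

lemma Psi_nontrivial: "\<exists>a::'k::{finite,field}. Psi a \<noteq> 1"
proof -
  obtain a :: 'k where a: "tr a \<noteq> 0" using tr_nonzero_exists by blast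
  let ?p = "CHAR('k)" and ?k = "tr_nat a"
  have k1: "?k < ?p" using tr_nat_spec[of a] by simp
  have k2: "?k \<noteq> 0"
  proof
    assume "?k = 0"
    hence "tr a = 0" using tr_nat_spec[of a] by simp
    thus False using a by simp
  qed
  note k = k1 k2
  have "Psi a \<noteq> 1"
  proof
    assume "Psi a = 1"
    hence "Re (Psi a) = 1" by simp
    hence "cos (2 * pi * real ?k / real ?p) = 1" unfolding Psi_def by simp
    then obtain i :: int where i: "2 * pi * real ?k / real ?p = real_of_int i * 2 * pi"
      using cos_one_2pi_int by blast
    hence "real ?k = real_of_int i * real ?p" using char_gt1[where 'k='k] by (simp add: field_simps)
    hence "real_of_int (int ?k) = real_of_int (i * int ?p)" by simp
    hence "int ?k = i * int ?p" by (simp only: of_int_eq_iff)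
    hence "int ?p dvd int ?k" by simp
    hence "?p dvd ?k" by presburger
    thus False using k nat_dvd_not_less by auto
  qed
  thus ?thesis by blast
qed



section \<open>Valuation ring\<close>

lemma Oinf_iff: "x \<in> Oinf \<longleftrightarrow> (\<forall>k<0. fls_nth x k = 0)"
proof
  assume "x \<in> Oinf" thus "\<forall>k<0. fls_nth x k = 0" by (auto simp: Oinf_def)
next
  assume "\<forall>k<0. fls_nth x k = 0" thus "x \<in> Oinf"
    unfolding Oinf_def by (auto intro: fls_subdegree_ge0I)
qed

lemma piOinf_iff: "x \<in> piOinf \<longleftrightarrow> (\<forall>k<1. fls_nth x k = 0)"
proof
  assume "x \<in> piOinf" thus "\<forall>k<1. fls_nth x k = 0" by (auto simp: piOinf_def)
next
  assume h: "\<forall>k<1. fls_nth x k = 0"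
  show "x \<in> piOinf"
  proof (cases "x = 0")
    case False thus ?thesis using h unfolding piOinf_def by (auto intro: fls_subdegree_geI)
  qed (simp add: piOinf_def)
qed

lemma Ounits_iff: "x \<in> Ounits \<longleftrightarrow> x \<in> Oinf \<and> fls_nth x 0 \<noteq> 0"
proof
  assume "x \<in> Ounits"
  hence h: "x \<noteq> 0" "fls_subdegree x = 0" by (auto simp: Ounits_def)
  have "fls_nth x (fls_subdegree x) \<noteq> 0" using h(1) by (rule nth_fls_subdegree_nonzero)
  thus "x \<in> Oinf \<and> fls_nth x 0 \<noteq> 0" using h by (simp add: Oinf_def)
next
  assume h: "x \<in> Oinf \<and> fls_nth x 0 \<noteq> 0"
  hence "x \<noteq> 0" by auto
  moreover have "fls_subdegree x \<le> 0" using h by (intro fls_subdegree_leI) auto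
  ultimately show "x \<in> Ounits" using h by (auto simp: Ounits_def Oinf_def)
qed

lemma O_0 [simp]: "0 \<in> Oinf" by (simp add: Oinf_def)
lemma O_1 [simp]: "1 \<in> Oinf" by (simp add: Oinf_def)
lemma O_const [simp]: "fls_const c \<in> Oinf" by (simp add: Oinf_def)
lemma O_Xpow [simp]: "(fls_X :: 'k::field fls) ^ n \<in> Oinf" by (simp add: Oinf_def)
lemma O_X [simp]: "(fls_X :: 'k::field fls) \<in> Oinf" by (simp add: Oinf_def)
lemma O_add [simp]: "x \<in> Oinf \<Longrightarrow> y \<in> Oinf \<Longrightarrow> x + y \<in> Oinf" by (simp add: Oinf_iff)
lemma O_uminus [simp]: "x \<in> Oinf \<Longrightarrow> - x \<in> Oinf" by (simp add: Oinf_iff)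
lemma O_diff [simp]: "x \<in> Oinf \<Longrightarrow> y \<in> Oinf \<Longrightarrow> x - y \<in> Oinf" by (simp add: Oinf_iff)
lemma O_mult [simp]: "(x::'k::field fls) \<in> Oinf \<Longrightarrow> y \<in> Oinf \<Longrightarrow> x * y \<in> Oinf"
  by (cases "x = 0"; cases "y = 0") (auto simp: Oinf_def)
lemma O_power [simp]: "(x::'k::field fls) \<in> Oinf \<Longrightarrow> x ^ n \<in> Oinf"
  by (induction n) auto

lemma piO_0 [simp]: "0 \<in> piOinf" by (simp add: piOinf_def)
lemma piO_O: "x \<in> piOinf \<Longrightarrow> x \<in> Oinf" by (simp add: piOinf_iff Oinf_iff)
lemma piO_add [simp]: "x \<in> piOinf \<Longrightarrow> y \<in> piOinf \<Longrightarrow> x + y \<in> piOinf" by (simp add: piOinf_iff)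
lemma piO_uminus [simp]: "x \<in> piOinf \<Longrightarrow> - x \<in> piOinf" by (simp add: piOinf_iff)
lemma piO_diff [simp]: "x \<in> piOinf \<Longrightarrow> y \<in> piOinf \<Longrightarrow> x - y \<in> piOinf" by (simp add: piOinf_iff)
lemma piO_mult: "(x::'k::field fls) \<in> piOinf \<Longrightarrow> y \<in> Oinf \<Longrightarrow> x * y \<in> piOinf"
  by (cases "x = 0"; cases "y = 0") (auto simp: Oinf_def piOinf_def)
lemma piO_mult2: "(x::'k::field fls) \<in> Oinf \<Longrightarrow> y \<in> piOinf \<Longrightarrow> x * y \<in> piOinf"
  using piO_mult[of y x] by (simp add: mult.commute)
lemma piO_X [simp]: "(fls_X :: 'k::field fls) \<in> piOinf" by (simp add: piOinf_def)
lemma piO_Xpow: "n \<ge> 1 \<Longrightarrow> (fls_X :: 'k::field fls) ^ n \<in> piOinf" by (simp add: piOinf_def)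

lemma shift1_O: "x \<in> piOinf \<Longrightarrow> fls_shift 1 x \<in> Oinf"
  by (simp add: piOinf_iff Oinf_iff)
lemma X_shift1: "(fls_X :: 'k::field fls) * fls_shift 1 x = x"
  by (simp add: fls_X_times_conv_shift)

lemma nth0_mult_O:
  assumes "(x::'k::field fls) \<in> Oinf" "y \<in> Oinf"
  shows "fls_nth (x * y) 0 = fls_nth x 0 * fls_nth y 0"
proof (cases "x = 0 \<or> y = 0")
  case True thus ?thesis by auto
next
  case False
  hence nz: "x \<noteq> 0" "y \<noteq> 0" by auto
  show ?thesis
  proof (cases "fls_subdegree x = 0 \<and> fls_subdegree y = 0")
    case True
    thus ?thesis using fls_times_base[of x y] by simp
  next
    case F: False
    have "fls_subdegree x \<ge> 0" "fls_subdegree y \<ge> 0" using assms by (auto simp: Oinf_def)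
    hence "0 < fls_subdegree x + fls_subdegree y" using F by linarith
    hence "fls_nth (x * y) 0 = 0" by (rule fls_times_nth_eq0)
    moreover have "fls_nth x 0 * fls_nth y 0 = 0"
      using F \<open>fls_subdegree x \<ge> 0\<close> \<open>fls_subdegree y \<ge> 0\<close>
      by (cases "fls_subdegree x = 0") auto
    ultimately show ?thesis by simp
  qed
qed

lemma Ounits_mult: "(x::'k::field fls) \<in> Ounits \<Longrightarrow> y \<in> Ounits \<Longrightarrow> x * y \<in> Ounits"
  by (simp add: Ounits_iff nth0_mult_O)

lemma Ounits_inverse: "(x::'k::field fls) \<in> Ounits \<Longrightarrow> inverse x \<in> Ounits"
  by (simp add: Ounits_def)

lemma Ounits_O: "x \<in> Ounits \<Longrightarrow> x \<in> Oinf" by (simp add: Ounits_iff)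

lemma Ounits_const: "c \<noteq> 0 \<Longrightarrow> fls_const c \<in> Ounits" by (simp add: Ounits_iff)
lemma Ounits_uminus: "x \<in> Ounits \<Longrightarrow> - x \<in> Ounits" by (simp add: Ounits_iff)

lemma Ounits_nonzero: "x \<in> Ounits \<Longrightarrow> x \<noteq> 0" by (simp add: Ounits_def)

lemma Ounits_add_piO: "(x::'k::field fls) \<in> Ounits \<Longrightarrow> y \<in> piOinf \<Longrightarrow> x + y \<in> Ounits"
  by (simp add: Ounits_iff piOinf_iff piO_O)

lemma piO_not_unit: "x \<in> piOinf \<Longrightarrow> x \<notin> Ounits" by (simp add: Ounits_iff piOinf_iff)

lemma O_not_piO_unit: "x \<in> Oinf \<Longrightarrow> x \<notin> piOinf \<Longrightarrow> x \<in> Ounits"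
proof -
  assume a: "x \<in> Oinf" "x \<notin> piOinf"
  then obtain k where k: "k < 1" "fls_nth x k \<noteq> 0" by (auto simp: piOinf_iff)
  have "\<not> k < 0" using a(1) k(2) by (auto simp: Oinf_iff)
  hence "k = 0" using k(1) by linarith
  thus "x \<in> Ounits" using a(1) k(2) by (simp add: Ounits_iff)
qed

lemma inverse_O: "(x::'k::field fls) \<in> Ounits \<Longrightarrow> inverse x \<in> Oinf"
  using Ounits_inverse Ounits_O by blast



section \<open>2x2 matrices\<close>

definition I2 :: "'a::comm_ring_1 mat2" where "I2 = M2 1 0 0 1"
definition sc :: "'a::comm_ring_1 \<Rightarrow> 'a mat2" where "sc z = M2 z 0 0 z"
fun minv :: "'a::field mat2 \<Rightarrow> 'a mat2" where
  "minv (M2 a b c d) = M2 (d / (a*d - b*c)) (- b / (a*d - b*c)) (- c / (a*d - b*c)) (a / (a*d - b*c))"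

lemma mmul_assoc: "mmul (mmul x y) z = mmul x (mmul y (z::'a::comm_ring_1 mat2))"
  by (cases x; cases y; cases z) (simp add: algebra_simps)

lemma mmul_I2 [simp]: "mmul I2 x = x" "mmul x I2 = (x::'a::comm_ring_1 mat2)"
  by (cases x; simp add: I2_def)+

lemma sc_comm: "mmul (sc a) x = mmul x (sc (a::'a::comm_ring_1))"
  by (cases x) (simp add: sc_def algebra_simps)

lemma sc_sc: "mmul (sc a) (sc b) = sc (a * (b::'a::comm_ring_1))"
  by (simp add: sc_def)

lemma sc_1: "sc 1 = I2" by (simp add: sc_def I2_def)

lemma mdet_mmul: "mdet (mmul x y) = mdet x * mdet (y::'a::comm_ring_1 mat2)"
  by (cases x; cases y) (simp add: algebra_simps)

lemma minv_alt: "minv (M2 a b c d) = M2 (d * inverse (a*d-b*c)) (- b * inverse (a*d-b*c)) (- c * inverse (a*d-b*c)) (a * inverse (a*d-b*c))"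
  by (simp add: divide_inverse)

lemma mmul_minv: "mdet x \<noteq> 0 \<Longrightarrow> mmul x (minv x) = (I2::'a::field mat2)"
proof (cases x)
  case (M2 a b c d)
  assume h: "mdet x \<noteq> 0"
  define i where "i = inverse (a*d - b*c)"
  have D: "(a*d - b*c) * i = 1" using h M2 by (simp add: i_def)
  have e: "a*(d*i) + b*(-c*i) = (a*d - b*c) * i" "c*(-b*i) + d*(a*i) = (a*d - b*c) * i"
          "a*(-b*i) + b*(a*i) = 0" "c*(d*i) + d*(-c*i) = 0"
    by (simp_all add: algebra_simps)
  show ?thesis unfolding M2 minv_alt i_def[symmetric] by (simp only: mmul.simps e D I2_def)
qed

lemma minv_mmul: "mdet x \<noteq> 0 \<Longrightarrow> mmul (minv x) x = (I2::'a::field mat2)"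
proof (cases x)
  case (M2 a b c d)
  assume h: "mdet x \<noteq> 0"
  define i where "i = inverse (a*d - b*c)"
  have D: "(a*d - b*c) * i = 1" using h M2 by (simp add: i_def)
  have e: "d*i*a + (-b*i)*c = (a*d - b*c) * i" "(-c*i)*b + a*i*d = (a*d - b*c) * i"
          "d*i*b + (-b*i)*d = 0" "(-c*i)*a + a*i*c = 0"
    by (simp_all add: algebra_simps)
  show ?thesis unfolding M2 minv_alt i_def[symmetric] by (simp only: mmul.simps e D I2_def)
qed

lemma mdet_minv: "mdet x \<noteq> 0 \<Longrightarrow> mdet (minv x) = inverse (mdet (x::'a::field mat2))"
proof -
  assume h: "mdet x \<noteq> 0"
  have "mdet x * mdet (minv x) = 1" using mmul_minv[OF h] mdet_mmul[of x "minv x"] by (simp add: I2_def)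
  thus ?thesis using h by (simp add: field_simps)
qed

lemma mmul_cancel_left:
  assumes "mdet h \<noteq> 0" "mmul h x = mmul h (y::'a::field mat2)"
  shows "x = y"
proof -
  have "mmul (minv h) (mmul h x) = mmul (minv h) (mmul h y)" using assms(2) by simp
  thus ?thesis by (simp add: mmul_assoc[symmetric] minv_mmul[OF assms(1)])
qed

lemma scalars_iff: "z \<in> scalars \<longleftrightarrow> (\<exists>a. a \<noteq> 0 \<and> z = sc a)"
  by (auto simp: scalars_def sc_def)

section \<open>Iwahori and GL2(O)\<close>

lemma Iwahori_iff: "M2 a b c d \<in> Iwahori \<longleftrightarrow>
   a \<in> Oinf \<and> b \<in> Oinf \<and> c \<in> piOinf \<and> d \<in> Oinf \<and> a*d - b*c \<in> Ounits"
  by (auto simp: Iwahori_def GL2O_def piO_O)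

lemma GL2O_iff: "M2 a b c d \<in> GL2O \<longleftrightarrow>
   a \<in> Oinf \<and> b \<in> Oinf \<and> c \<in> Oinf \<and> d \<in> Oinf \<and> a*d - b*c \<in> Ounits"
  by (auto simp: GL2O_def)

lemma Iw_GL2O: "k \<in> Iwahori \<Longrightarrow> k \<in> GL2O" by (simp add: Iwahori_def)

lemma Iw_I2: "(I2 :: 'k::field fls mat2) \<in> Iwahori"
  by (simp add: I2_def Iwahori_iff Ounits_iff)

lemma GL2O_I2: "(I2 :: 'k::field fls mat2) \<in> GL2O"
  by (simp add: I2_def GL2O_iff Ounits_iff)

lemma mdet_unit_nz: "mdet k \<in> Ounits \<Longrightarrow> mdet k \<noteq> 0" by (simp add: Ounits_def)

lemma GL2O_det: "(k :: 'k::field fls mat2) \<in> GL2O \<Longrightarrow> mdet k \<in> Ounits"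
  by (cases k) (simp add: GL2O_iff)

lemma Iw_det: "(k :: 'k::field fls mat2) \<in> Iwahori \<Longrightarrow> mdet k \<in> Ounits"
  using GL2O_det Iw_GL2O by blast

lemma GL2O_mult: "x \<in> GL2O \<Longrightarrow> y \<in> GL2O \<Longrightarrow> mmul x y \<in> (GL2O :: 'k::field fls mat2 set)"
proof -
  assume h: "x \<in> GL2O" "y \<in> GL2O"
  have "mdet (mmul x y) \<in> Ounits" using h by (simp add: mdet_mmul GL2O_det Ounits_mult)
  thus ?thesis using h by (cases x; cases y) (simp add: GL2O_iff)
qed

lemma Iw_mult: "x \<in> Iwahori \<Longrightarrow> y \<in> Iwahori \<Longrightarrow> mmul x y \<in> (Iwahori :: 'k::field fls mat2 set)"
proof -
  assume h: "x \<in> Iwahori" "y \<in> Iwahori"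
  have "mdet (mmul x y) \<in> Ounits" using h by (simp add: mdet_mmul Iw_det Ounits_mult)
  moreover obtain a b c d where x: "x = M2 a b c d" by (cases x)
  moreover obtain a' b' c' d' where y: "y = M2 a' b' c' d'" by (cases y)
  moreover have "c * a' + d * c' \<in> piOinf" if "x = M2 a b c d" "y = M2 a' b' c' d'" for a b c d a' b' c' d'
    using h that by (auto simp: Iwahori_iff intro!: piO_add piO_mult piO_mult2[of d])
  ultimately show ?thesis using h piO_O[of c] piO_O[of c']
    by (auto simp: Iwahori_iff)
qed

lemma div_unit_O: "x \<in> Oinf \<Longrightarrow> u \<in> Ounits \<Longrightarrow> x / u \<in> (Oinf :: 'k::field fls set)"
  by (simp add: divide_inverse inverse_O)

lemma GL2O_minv: "x \<in> GL2O \<Longrightarrow> minv x \<in> (GL2O :: 'k::field fls mat2 set)"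
proof -
  assume h: "x \<in> GL2O"
  have d: "mdet x \<in> Ounits" "mdet x \<noteq> 0" using h GL2O_det mdet_unit_nz by blast+
  have m: "mdet (minv x) \<in> Ounits" using d by (simp add: mdet_minv Ounits_inverse)
  obtain a b c d where x: "x = M2 a b c d" by (cases x)
  define D where "D = a*d - b*c"
  have DU: "D \<in> Ounits" using d(1) by (simp add: x D_def)
  have O: "a \<in> Oinf" "b \<in> Oinf" "c \<in> Oinf" "d \<in> Oinf" using h by (simp_all add: x GL2O_iff)
  have m': "(d/D)*(a/D) - (-b/D)*(-c/D) \<in> Ounits" using m by (simp only: x minv.simps mdet.simps D_def)
  have "d/D \<in> Oinf" "(-b)/D \<in> Oinf" "(-c)/D \<in> Oinf" "a/D \<in> Oinf"
    using O DU by (simp_all only: div_unit_O O_uminus)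
  thus ?thesis using m' unfolding x minv.simps GL2O_iff D_def[symmetric] by blast
qed

lemma Iw_minv: "x \<in> Iwahori \<Longrightarrow> minv x \<in> (Iwahori :: 'k::field fls mat2 set)"
proof -
  assume h: "x \<in> Iwahori"
  have "minv x \<in> GL2O" using h Iw_GL2O GL2O_minv by blast
  moreover obtain a b c d where x: "x = M2 a b c d" by (cases x)
  moreover have "c \<in> piOinf" "a*d - b*c \<in> Ounits" using h by (simp_all add: x Iwahori_iff)
  moreover have "(- c) / (a*d - b*c) \<in> piOinf"
    using calculation by (simp add: divide_inverse piO_mult inverse_O)
  ultimately show ?thesis unfolding Iwahori_def by simp
qed

section \<open>Cosets\<close>

definition coset :: "'k::field fls mat2 set \<Rightarrow> 'k fls mat2 \<Rightarrow> 'k fls mat2 set" where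
  "coset K g = {x. \<exists>z k. z \<in> scalars \<and> k \<in> K \<and> x = mmul g (mmul z k)}"

lemma edgeOf_coset: "edgeOf g = coset Iwahori g"
  by (simp add: edgeOf_def coset_def)
lemma vertexOf_coset: "vertexOf g = coset GL2O g"
  by (simp add: vertexOf_def coset_def)

definition grp :: "'k::field fls mat2 set \<Rightarrow> bool" where
  "grp K \<longleftrightarrow> I2 \<in> K \<and> (\<forall>a\<in>K. \<forall>b\<in>K. mmul a b \<in> K) \<and> (\<forall>a\<in>K. minv a \<in> K \<and> mdet a \<noteq> 0)"

lemma grp_Iw: "grp Iwahori"
  unfolding grp_def using Iw_I2 Iw_mult Iw_minv Iw_det mdet_unit_nz by blast
lemma grp_GL2O: "grp GL2O"
  unfolding grp_def using GL2O_I2 GL2O_mult GL2O_minv GL2O_det mdet_unit_nz by blast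

lemma sc_in_scalars: "a \<noteq> 0 \<Longrightarrow> sc a \<in> scalars" by (auto simp: scalars_iff)

lemma coset_mem: "grp K \<Longrightarrow> g \<in> coset K g"
proof -
  assume "grp K"
  hence "I2 \<in> K" by (simp add: grp_def)
  moreover have "sc 1 \<in> scalars" by (rule sc_in_scalars) simp
  moreover have "g = mmul g (mmul (sc 1) I2)" by (simp add: sc_1)
  ultimately show ?thesis unfolding coset_def by blast
qed

lemma sc_k_sc_k: "mmul (sc a) (mmul k (mmul (sc b) k')) = mmul (sc (a*b)) (mmul k k')"
  by (cases k; cases k') (simp add: sc_def algebra_simps)

lemma coset_subset:
  assumes K: "grp K" and z: "z \<in> scalars" and k: "k \<in> K"
  shows "coset K (mmul g (mmul z k)) \<subseteq> coset K g"
proof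
  fix x assume "x \<in> coset K (mmul g (mmul z k))"
  then obtain z' k' where h: "z' \<in> scalars" "k' \<in> K" "x = mmul (mmul g (mmul z k)) (mmul z' k')"
    by (auto simp: coset_def)
  obtain a where a: "a \<noteq> 0" "z = sc a" using z by (auto simp: scalars_iff)
  obtain b where b: "b \<noteq> 0" "z' = sc b" using h(1) by (auto simp: scalars_iff)
  have "x = mmul g (mmul (sc (a*b)) (mmul k k'))"
    using h(3) by (simp add: mmul_assoc sc_k_sc_k a b)
  moreover have "sc (a*b) \<in> scalars" using a b by (simp add: sc_in_scalars)
  moreover have "mmul k k' \<in> K" using K k h(2) by (simp add: grp_def)
  ultimately show "x \<in> coset K g" unfolding coset_def by blast
qed

lemma coset_right:
  assumes K: "grp K" and z: "z \<in> scalars" and k: "k \<in> K"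
  shows "coset K (mmul g (mmul z k)) = coset K g"
proof
  show "coset K (mmul g (mmul z k)) \<subseteq> coset K g" by (rule coset_subset[OF assms])
next
  obtain a where a: "a \<noteq> 0" "z = sc a" using z by (auto simp: scalars_iff)
  have kd: "mdet k \<noteq> 0" "minv k \<in> K" using K k by (auto simp: grp_def)
  have "mmul (mmul g (mmul z k)) (mmul (sc (inverse a)) (minv k)) = mmul g (mmul (sc (a * inverse a)) (mmul k (minv k)))"
    by (simp add: mmul_assoc sc_k_sc_k a)
  also have "\<dots> = g" using a kd by (simp add: mmul_minv sc_1)
  finally have e: "mmul (mmul g (mmul z k)) (mmul (sc (inverse a)) (minv k)) = g" .
  have "coset K (mmul (mmul g (mmul z k)) (mmul (sc (inverse a)) (minv k))) \<subseteq> coset K (mmul g (mmul z k))"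
    using a kd by (intro coset_subset[OF K]) (simp_all add: sc_in_scalars)
  thus "coset K g \<subseteq> coset K (mmul g (mmul z k))" by (simp only: e)
qed

lemma coset_right_K: "grp K \<Longrightarrow> k \<in> K \<Longrightarrow> coset K (mmul g k) = coset K g"
proof -
  assume h: "grp K" "k \<in> K"
  have "sc 1 \<in> scalars" by (rule sc_in_scalars) simp
  from coset_right[OF h(1) this h(2), of g] show ?thesis by (simp only: sc_1 mmul_I2)
qed

lemma coset_scale: "grp K \<Longrightarrow> a \<noteq> 0 \<Longrightarrow> coset K (mmul g (sc a)) = coset K g"
  using coset_right[of K "sc a" I2 g] by (simp add: sc_in_scalars grp_def)

lemma coset_eqD:
  assumes "grp K" "coset K g1 = coset K g2"
  shows "\<exists>z k. z \<in> scalars \<and> k \<in> K \<and> g2 = mmul g1 (mmul z k)"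
proof -
  have "g2 \<in> coset K g1" using coset_mem[OF assms(1), of g2] assms(2) by simp
  thus ?thesis by (auto simp: coset_def)
qed

lemma edgeOf_right_Iw: "k \<in> Iwahori \<Longrightarrow> edgeOf (mmul g k) = edgeOf g"
  by (simp add: edgeOf_coset coset_right_K grp_Iw)
lemma edgeOf_scale: "a \<noteq> 0 \<Longrightarrow> edgeOf (mmul g (sc a)) = edgeOf g"
  by (simp add: edgeOf_coset coset_scale grp_Iw)
lemma vertexOf_right_GL2O: "k \<in> GL2O \<Longrightarrow> vertexOf (mmul g k) = vertexOf g"
  by (simp add: vertexOf_coset coset_right_K grp_GL2O)

lemma edgeOf_eqD: "edgeOf g1 = edgeOf g2 \<Longrightarrow> \<exists>a k. a \<noteq> 0 \<and> k \<in> Iwahori \<and> g2 = mmul g1 (mmul (sc a) k)"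
  using coset_eqD[OF grp_Iw, of g1 g2] by (auto simp: edgeOf_coset scalars_iff)
lemma vertexOf_eqD: "vertexOf g1 = vertexOf g2 \<Longrightarrow> \<exists>a k. a \<noteq> 0 \<and> k \<in> GL2O \<and> g2 = mmul g1 (mmul (sc a) k)"
  using coset_eqD[OF grp_GL2O, of g1 g2] by (auto simp: vertexOf_coset scalars_iff)

lemma edgeOf_Edges: "mdet g \<noteq> 0 \<Longrightarrow> edgeOf g \<in> Edges"
  by (simp add: Edges_def GL2K_def)
lemma vertexOf_Vertices: "mdet g \<noteq> 0 \<Longrightarrow> vertexOf g \<in> Vertices"
  by (simp add: Vertices_def GL2K_def)

lemma act_edgeOf: "act h (edgeOf g) = edgeOf (mmul h g)"
  unfolding act_def edgeOf_def by (auto simp: mmul_assoc)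

lemma origin_edgeOf: "origin (edgeOf g) = vertexOf (g :: 'k::field fls mat2)"
proof
  show "origin (edgeOf g) \<subseteq> vertexOf g"
  proof
    fix y assume "y \<in> origin (edgeOf g)"
    then obtain z k k' where h: "z \<in> scalars" "k \<in> Iwahori" "k' \<in> GL2O" "y = mmul (mmul g (mmul z k)) k'"
      by (auto simp: origin_def edgeOf_def)
    have "y = mmul g (mmul z (mmul k k'))" using h(4) by (simp add: mmul_assoc)
    moreover have "mmul k k' \<in> GL2O" using h Iw_GL2O GL2O_mult by blast
    ultimately show "y \<in> vertexOf g" using h(1) by (auto simp: vertexOf_def)
  qed
next
  show "vertexOf g \<subseteq> origin (edgeOf g)"
  proof
    fix y assume "y \<in> vertexOf g"
    then obtain z k where h: "z \<in> scalars" "k \<in> GL2O" "y = mmul g (mmul z k)" by (auto simp: vertexOf_def)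
    have "mmul g (mmul z I2) \<in> edgeOf g" using h(1) Iw_I2 unfolding edgeOf_def by blast
    moreover have "y = mmul (mmul g (mmul z I2)) k" using h(3) by (simp add: mmul_assoc)
    ultimately show "y \<in> origin (edgeOf g)" using h(2) unfolding origin_def by blast
  qed
qed

fun cw :: "'k::field fls mat2 \<Rightarrow> 'k fls mat2" where
  "cw (M2 a b c d) = M2 d (fls_shift 1 c) (fls_X * b) a"

lemma cw_right: "k \<in> Iwahori \<Longrightarrow> mmul k wmat = mmul wmat (cw k)"
proof (cases k)
  case (M2 a b c d)
  assume "k \<in> Iwahori"
  hence "c \<in> piOinf" by (simp add: M2 Iwahori_iff)
  hence "fls_X * fls_shift 1 c = c" by (simp add: X_shift1)
  thus ?thesis by (simp add: M2 wmat_def algebra_simps)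
qed

lemma cw_left: "k \<in> Iwahori \<Longrightarrow> mmul wmat k = mmul (cw k) wmat"
proof (cases k)
  case (M2 a b c d)
  assume "k \<in> Iwahori"
  hence "c \<in> piOinf" by (simp add: M2 Iwahori_iff)
  hence "fls_X * fls_shift 1 c = c" by (simp add: X_shift1)
  hence "fls_shift 1 c * fls_X = c" by (simp add: mult.commute)
  thus ?thesis by (simp add: M2 wmat_def algebra_simps)
qed

lemma cw_Iw: "k \<in> Iwahori \<Longrightarrow> cw k \<in> Iwahori"
proof (cases k)
  case (M2 a b c d)
  assume "k \<in> Iwahori"
  hence h: "a \<in> Oinf" "b \<in> Oinf" "c \<in> piOinf" "d \<in> Oinf" "a*d - b*c \<in> Ounits" by (simp_all add: M2 Iwahori_iff)
  have e: "fls_X * fls_shift 1 c = c" using h(3) by (simp add: X_shift1)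
  have eq: "d * a - fls_shift 1 c * (fls_X * b) = a*d - b*c"
    using e by (simp add: algebra_simps)
  show ?thesis unfolding M2 cw.simps Iwahori_iff eq using h shift1_O[OF h(3)] piO_mult[OF piO_X h(2)] by blast
qed

lemma opp_edgeOf: "opp (edgeOf g) = edgeOf (mmul g wmat)"
proof
  show "opp (edgeOf g) \<subseteq> edgeOf (mmul g wmat)"
  proof
    fix y assume "y \<in> opp (edgeOf g)"
    then obtain z k where h: "z \<in> scalars" "k \<in> Iwahori" "y = mmul (mmul g (mmul z k)) wmat"
      by (auto simp: opp_def edgeOf_def)
    have "y = mmul g (mmul z (mmul k wmat))" using h(3) by (simp add: mmul_assoc)
    also have "\<dots> = mmul g (mmul z (mmul wmat (cw k)))" using cw_right[OF h(2)] by simp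
    also have "\<dots> = mmul g (mmul (mmul z wmat) (cw k))" by (simp add: mmul_assoc)
    also have "\<dots> = mmul g (mmul (mmul wmat z) (cw k))"
      using h(1) by (auto simp: scalars_iff sc_comm)
    also have "\<dots> = mmul (mmul g wmat) (mmul z (cw k))" by (simp add: mmul_assoc)
    finally show "y \<in> edgeOf (mmul g wmat)" using h(1) cw_Iw[OF h(2)] by (auto simp: edgeOf_def)
  qed
next
  show "edgeOf (mmul g wmat) \<subseteq> opp (edgeOf g)"
  proof
    fix y assume "y \<in> edgeOf (mmul g wmat)"
    then obtain z k where h: "z \<in> scalars" "k \<in> Iwahori" "y = mmul (mmul g wmat) (mmul z k)"
      by (auto simp: edgeOf_def)
    have "y = mmul g (mmul (mmul wmat z) k)" using h(3) by (simp add: mmul_assoc)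
    also have "\<dots> = mmul g (mmul (mmul z wmat) k)"
      using h(1) by (auto simp: scalars_iff sc_comm)
    also have "\<dots> = mmul g (mmul z (mmul wmat k))" by (simp add: mmul_assoc)
    also have "\<dots> = mmul g (mmul z (mmul (cw k) wmat))" using cw_left[OF h(2)] by simp
    also have "\<dots> = mmul (mmul g (mmul z (cw k))) wmat" by (simp add: mmul_assoc)
    finally have "y = mmul (mmul g (mmul z (cw k))) wmat" .
    moreover have "mmul g (mmul z (cw k)) \<in> edgeOf g" using h(1) cw_Iw[OF h(2)] by (auto simp: edgeOf_def)
    ultimately show "y \<in> opp (edgeOf g)" by (auto simp: opp_def)
  qed
qed



definition kb :: "'k::field \<Rightarrow> 'k fls mat2" where "kb b = M2 (fls_const b) 1 1 0"

lemma kb_GL2O: "kb b \<in> GL2O"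
  by (simp add: kb_def GL2O_iff Ounits_iff)

lemma mdet_kb: "mdet (kb b) = -1" by (simp add: kb_def)

lemma Edges_D: "e \<in> Edges \<Longrightarrow> \<exists>g. mdet g \<noteq> 0 \<and> e = edgeOf g"
  by (auto simp: Edges_def GL2K_def)

lemma O_nth0_piO: "x \<in> Oinf \<Longrightarrow> fls_nth x 0 = 0 \<Longrightarrow> x \<in> piOinf"
proof -
  assume h: "x \<in> Oinf" "fls_nth x 0 = 0"
  have "fls_nth x k = 0" if "k < 1" for k
  proof (cases "k < 0")
    case True thus ?thesis using h(1) by (simp add: Oinf_iff)
  next
    case False hence "k = 0" using that by simp
    thus ?thesis using h(2) by simp
  qed
  thus ?thesis by (simp add: piOinf_iff)
qed

lemma GL2O_decomp:
  assumes k: "k \<in> GL2O"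
  shows "k \<in> Iwahori \<or> (\<exists>b k'. k' \<in> Iwahori \<and> k = mmul (kb b) k')"
proof (cases k)
  case (M2 \<alpha> \<beta> \<gamma> \<delta>)
  have h: "\<alpha> \<in> Oinf" "\<beta> \<in> Oinf" "\<gamma> \<in> Oinf" "\<delta> \<in> Oinf" "\<alpha>*\<delta> - \<beta>*\<gamma> \<in> Ounits"
    using k by (simp_all add: M2 GL2O_iff)
  show ?thesis
  proof (cases "\<gamma> \<in> piOinf")
    case True
    hence "k \<in> Iwahori" using h by (simp add: M2 Iwahori_iff)
    thus ?thesis by simp
  next
    case False
    hence gu: "\<gamma> \<in> Ounits" using h(3) by (rule O_not_piO_unit[rotated])
    hence gnz: "\<gamma> \<noteq> 0" by (rule Ounits_nonzero)
    define b0 where "b0 = fls_nth (\<alpha> * inverse \<gamma>) 0"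
    define k' where "k' = M2 \<gamma> \<delta> (\<alpha> - fls_const b0 * \<gamma>) (\<beta> - fls_const b0 * \<delta>)"
    have keq: "k = mmul (kb b0) k'" by (simp add: M2 k'_def kb_def algebra_simps)
    have t: "\<alpha> * inverse \<gamma> - fls_const b0 \<in> piOinf"
      using h(1) inverse_O[OF gu] by (intro O_nth0_piO) (simp_all add: b0_def)
    have e: "\<alpha> - fls_const b0 * \<gamma> = \<gamma> * (\<alpha> * inverse \<gamma> - fls_const b0)"
      using gnz by (simp add: algebra_simps)
    have p: "\<alpha> - fls_const b0 * \<gamma> \<in> piOinf" unfolding e using h(3) t by (rule piO_mult2)
    have d: "\<gamma> * (\<beta> - fls_const b0 * \<delta>) - \<delta> * (\<alpha> - fls_const b0 * \<gamma>) = - (\<alpha>*\<delta> - \<beta>*\<gamma>)"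
      by (simp add: algebra_simps)
    have "k' \<in> Iwahori" unfolding k'_def Iwahori_iff d using h p Ounits_uminus[OF h(5)] by simp
    thus ?thesis using keq by blast
  qed
qed

lemma edges_out:
  assumes hd: "mdet h \<noteq> 0"
  shows "{e \<in> Edges. origin e = vertexOf h} = insert (edgeOf h) (range (\<lambda>b. edgeOf (mmul h (kb b))))"
proof
  show "{e \<in> Edges. origin e = vertexOf h} \<subseteq> insert (edgeOf h) (range (\<lambda>b. edgeOf (mmul h (kb b))))"
  proof
    fix e assume "e \<in> {e \<in> Edges. origin e = vertexOf h}"
    then obtain g where g: "mdet g \<noteq> 0" "e = edgeOf g" "vertexOf g = vertexOf h"
      using Edges_D by (force simp: origin_edgeOf)
    obtain a k where ak: "a \<noteq> 0" "k \<in> GL2O" "g = mmul h (mmul (sc a) k)"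
      using vertexOf_eqD[OF sym[OF g(3)]] by blast
    have "g = mmul (mmul h k) (sc a)" using ak(3) by (simp add: sc_comm mmul_assoc)
    hence eg: "e = edgeOf (mmul h k)" using g(2) edgeOf_scale[OF ak(1)] by simp
    from GL2O_decomp[OF ak(2)] show "e \<in> insert (edgeOf h) (range (\<lambda>b. edgeOf (mmul h (kb b))))"
    proof
      assume "k \<in> Iwahori"
      hence "e = edgeOf h" using eg edgeOf_right_Iw by simp
      thus ?thesis by simp
    next
      assume "\<exists>b k'. k' \<in> Iwahori \<and> k = mmul (kb b) k'"
      then obtain b k' where "k' \<in> Iwahori" "k = mmul (kb b) k'" by blast
      hence "e = edgeOf (mmul h (kb b))" using eg edgeOf_right_Iw by (simp add: mmul_assoc[symmetric])
      thus ?thesis by blast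
    qed
  qed
next
  show "insert (edgeOf h) (range (\<lambda>b. edgeOf (mmul h (kb b)))) \<subseteq> {e \<in> Edges. origin e = vertexOf h}"
  proof -
    have "edgeOf h \<in> {e \<in> Edges. origin e = vertexOf h}" using hd by (simp add: edgeOf_Edges origin_edgeOf)
    moreover have "edgeOf (mmul h (kb b)) \<in> {e \<in> Edges. origin e = vertexOf h}" for b
    proof -
      have "mdet (mmul h (kb b)) \<noteq> 0" using hd by (simp add: mdet_mmul mdet_kb)
      moreover have "vertexOf (mmul h (kb b)) = vertexOf h" by (rule vertexOf_right_GL2O[OF kb_GL2O])
      ultimately show ?thesis by (simp add: edgeOf_Edges origin_edgeOf)
    qed
    ultimately show ?thesis by blast
  qed
qed

lemma edges_out_notin:
  assumes hd: "mdet h \<noteq> 0"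
  shows "edgeOf h \<notin> range (\<lambda>b. edgeOf (mmul h (kb b)))"
proof
  assume "edgeOf h \<in> range (\<lambda>b. edgeOf (mmul h (kb b)))"
  then obtain b where "edgeOf h = edgeOf (mmul h (kb b))" by auto
  then obtain a k where ak: "a \<noteq> 0" "k \<in> Iwahori" "mmul h (kb b) = mmul h (mmul (sc a) k)"
    using edgeOf_eqD by blast
  have e: "kb b = mmul (sc a) k" using mmul_cancel_left[OF hd ak(3)] .
  obtain \<alpha> \<beta> \<gamma> \<delta> where k: "k = M2 \<alpha> \<beta> \<gamma> \<delta>" by (cases k)
  have "a * \<delta> = 0" using e by (simp add: k kb_def sc_def)
  hence "\<delta> = 0" using ak(1) by simp
  moreover have i: "\<beta> \<in> Oinf" "\<gamma> \<in> piOinf" "\<alpha>*\<delta> - \<beta>*\<gamma> \<in> Ounits" using ak(2) by (simp_all add: k Iwahori_iff)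
  ultimately have "- (\<beta>*\<gamma>) \<in> Ounits" by simp
  moreover have "- (\<beta>*\<gamma>) \<in> piOinf" using i by (simp add: piO_mult2)
  ultimately show False using piO_not_unit by blast
qed

lemma edges_out_inj:
  assumes hd: "mdet h \<noteq> 0"
  shows "inj (\<lambda>b. edgeOf (mmul h (kb b)))"
proof (rule injI)
  fix b b' assume "edgeOf (mmul h (kb b)) = edgeOf (mmul h (kb b'))"
  then obtain a k where ak: "a \<noteq> 0" "k \<in> Iwahori" "mmul h (kb b') = mmul (mmul h (kb b)) (mmul (sc a) k)"
    using edgeOf_eqD by blast
  have "mmul h (kb b') = mmul h (mmul (kb b) (mmul (sc a) k))" using ak(3) by (simp add: mmul_assoc)
  hence e: "kb b' = mmul (kb b) (mmul (sc a) k)" by (rule mmul_cancel_left[OF hd])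
  obtain \<alpha> \<beta> \<gamma> \<delta> where k: "k = M2 \<alpha> \<beta> \<gamma> \<delta>" by (cases k)
  have e1: "a * \<alpha> = 1" "a * \<beta> = 0" "fls_const b * (a * \<beta>) + a * \<delta> = 1"
     "fls_const b * (a * \<alpha>) + a * \<gamma> = fls_const b'"
    using e by (simp_all add: k kb_def sc_def)
  have i: "\<alpha> \<in> Oinf" "\<delta> \<in> Oinf" "\<gamma> \<in> piOinf" "\<alpha>*\<delta> - \<beta>*\<gamma> \<in> Ounits" using ak(2) by (simp_all add: k Iwahori_iff)
  have "\<beta> = 0" using e1(2) ak(1) by simp
  hence "\<alpha> * \<delta> \<in> Ounits" using i(4) by simp
  hence "fls_nth \<alpha> 0 \<noteq> 0" using i(1,2) by (simp add: Ounits_iff nth0_mult_O)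
  hence au: "\<alpha> \<in> Ounits" using i(1) by (simp add: Ounits_iff)
  have "\<alpha> * a = 1" using e1(1) by (simp add: mult.commute)
  hence "inverse \<alpha> = a" by (rule inverse_unique)
  hence "a \<in> Oinf" using au inverse_O by blast
  hence "a * \<gamma> \<in> piOinf" using i(3) by (simp add: piO_mult2)
  moreover have "a * \<gamma> = fls_const (b' - b)"
  proof -
    have "fls_const b + a * \<gamma> = fls_const b'" using e1(4) e1(1) by simp
    hence "a * \<gamma> = fls_const b' - fls_const b" by (simp add: eq_diff_eq add.commute)
    thus ?thesis by (simp add: fls_minus_const)
  qed
  ultimately have "fls_const (b' - b) \<in> piOinf" by simp
  hence "\<forall>k<1. fls_nth (fls_const (b' - b)) k = 0" by (simp only: piOinf_iff)
  hence "fls_nth (fls_const (b' - b)) 0 = 0" by (metis zero_less_one)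
  hence "b' - b = 0" by simp
  thus "b = b'" by simp
qed

lemma harmonic_sum:
  fixes F :: "'k::{finite,field} fls mat2 set \<Rightarrow> complex"
  assumes "harmonic F" "mdet h \<noteq> 0"
  shows "F (edgeOf h) + (\<Sum>b\<in>UNIV. F (edgeOf (mmul h (kb b)))) = 0"
proof -
  have "vertexOf h \<in> Vertices" using assms(2) by (rule vertexOf_Vertices)
  hence "(\<Sum>e\<in>{e \<in> Edges. origin e = vertexOf h}. F e) = 0" using assms(1) by (simp add: harmonic_def)
  also have "(\<Sum>e\<in>{e \<in> Edges. origin e = vertexOf h}. F e) =
     F (edgeOf h) + (\<Sum>e\<in>range (\<lambda>b. edgeOf (mmul h (kb b))). F e)"
    unfolding edges_out[OF assms(2)] using edges_out_notin[OF assms(2)] by (simp add: sum.insert)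
  also have "(\<Sum>e\<in>range (\<lambda>b. edgeOf (mmul h (kb b))). F e) = (\<Sum>b\<in>UNIV. F (edgeOf (mmul h (kb b))))"
    using edges_out_inj[OF assms(2)] by (simp add: sum.reindex)
  finally show ?thesis .
qed

definition E :: "nat \<Rightarrow> 'k::field fls \<Rightarrow> 'k fls mat2 set" where
  "E r u = edgeOf (M2 (fls_X ^ r) u 0 1)"

lemma E_Edges: "E r u \<in> Edges" by (simp add: E_def edgeOf_Edges)

lemma opp_E: "opp (E (Suc r) u) = edgeOf (M2 u (fls_X ^ r) 1 0)"
proof -
  have "mmul (M2 (fls_X ^ Suc r) u 0 1) wmat = mmul (M2 u (fls_X ^ r) 1 0) (sc fls_X)"
    by (simp add: wmat_def sc_def algebra_simps)
  thus ?thesis by (simp add: E_def opp_edgeOf edgeOf_scale)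
qed

lemma harm_E:
  fixes F :: "'k::{finite,field} fls mat2 set \<Rightarrow> complex"
  assumes "harmonic F"
  shows "F (E r u) = (\<Sum>b\<in>UNIV. F (E (Suc r) (u + fls_const b * fls_X ^ r)))"
proof -
  let ?h = "M2 (fls_X ^ r) u 0 (1::'k fls)"
  have "F (edgeOf ?h) + (\<Sum>b\<in>UNIV. F (edgeOf (mmul ?h (kb b)))) = 0"
    using assms by (intro harmonic_sum) auto
  moreover have "edgeOf (mmul ?h (kb b)) = opp (E (Suc r) (u + fls_const b * fls_X ^ r))" for b
    by (simp add: opp_E kb_def algebra_simps)
  moreover have "F (opp (E (Suc r) v)) = - F (E (Suc r) v)" for v using assms E_Edges[of "Suc r" v] unfolding harmonic_def by blast
  moreover have "edgeOf ?h = E r u" by (simp add: E_def)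
  ultimately have "F (E r u) + (\<Sum>b\<in>UNIV. - F (E (Suc r) (u + fls_const b * fls_X ^ r))) = 0"
    by (simp del: power_Suc)
  thus ?thesis by (simp add: sum_negf eq_neg_iff_add_eq_0)
qed



section \<open>Embedding of polynomials\<close>

lemma emb_nth: "fls_nth (emb a) j = (if j \<le> 0 then coeff a (nat (-j)) else 0)"
proof -
  have "fls_nth (emb a) j = (\<Sum>i\<le>degree a. coeff a i * (if j = - int i then 1 else 0))"
    unfolding emb_def by (simp add: fls_nth_sum)
  also have "\<dots> = (\<Sum>i\<in>{i. i \<le> degree a \<and> j = - int i}. coeff a i)"
    by (rule sum.mono_neutral_cong_right) auto
  also have "\<dots> = (if j \<le> 0 then coeff a (nat (-j)) else 0)"
  proof (cases "j \<le> 0")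
    case True
    show ?thesis
    proof (cases "nat (-j) \<le> degree a")
      case True
      hence s: "{i. i \<le> degree a \<and> j = - int i} = {nat (-j)}" using \<open>j \<le> 0\<close> by auto
      show ?thesis unfolding s using \<open>j \<le> 0\<close> by simp
    next
      case False
      hence s: "{i. i \<le> degree a \<and> j = - int i} = {}" using \<open>j \<le> 0\<close> by auto
      have c: "coeff a (nat (-j)) = 0" using False by (simp add: coeff_eq_0)
      show ?thesis unfolding s using c \<open>j \<le> 0\<close> by simp
    qed
  next
    case False
    hence s: "{i. i \<le> degree a \<and> j = - int i} = {}" by auto
    show ?thesis unfolding s using False by simp
  qed
  finally show ?thesis .
qed

lemma emb_add: "emb (a + b) = emb a + emb b"
  by (rule fls_eqI) (simp add: emb_nth)
lemma emb_0 [simp]: "emb 0 = 0"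
  by (rule fls_eqI) (simp add: emb_nth)
lemma emb_smult: "emb (smult c a) = fls_const c * emb a"
  by (rule fls_eqI) (simp add: emb_nth)
lemma emb_pCons0: "emb [:c:] = fls_const c"
  by (rule fls_eqI) (auto simp: emb_nth coeff_pCons split: nat.split)
lemma emb_1 [simp]: "emb 1 = 1"
  using emb_pCons0[of 1] by (simp add: one_pCons)
lemma emb_monom: "emb (monom c k) = fls_const c * fls_X_inv ^ k"
  by (rule fls_eqI) (auto simp: emb_nth coeff_monom)

lemma emb_monom_mult_nth1: "fls_nth (emb (monom c k) * w) 1 = c * fls_nth w (1 + int k)"
proof -
  have "emb (monom c k) * w = fls_const c * (fls_X_inv ^ k * w)" by (simp only: emb_monom mult.assoc)
  thus ?thesis by (simp add: fls_X_inv_power_times_conv_shift add.commute)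
qed

lemma emb_mult_Xpow_nth: "fls_nth (emb m * fls_X ^ N) j = fls_nth (emb m) (j - int N)"
  by (simp add: fls_X_power_times_conv_shift)

section \<open>Gamma_0 invariance\<close>

lemma HH_inv:
  assumes "F \<in> HH n" "\<gamma> \<in> Gamma0 n" "mdet g \<noteq> 0"
  shows "F (edgeOf (mmul (memb \<gamma>) g)) = F (edgeOf g)"
proof -
  have "F (act (memb \<gamma>) (edgeOf g)) = F (edgeOf g)" using assms edgeOf_Edges by (auto simp: HH_def)
  thus ?thesis by (simp add: act_edgeOf)
qed

lemma HH_harmonic: "F \<in> HH n \<Longrightarrow> harmonic F" by (simp add: HH_def)

lemma Gamma0_transl: "M2 1 c 0 1 \<in> Gamma0 n"
  unfolding Gamma0_def by auto

lemma Gamma0_diag: "l \<noteq> 0 \<Longrightarrow> M2 [:l:] 0 0 1 \<in> Gamma0 n"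
  unfolding Gamma0_def by (auto simp: is_unit_const_poly_iff intro: field_class.field_divide_inverse dvdI[of _ _ "inverse l"])

lemma Gamma0_low: "M2 1 0 n 1 \<in> Gamma0 n"
  unfolding Gamma0_def by auto

lemma E_transl:
  assumes "F \<in> HH n"
  shows "F (E r (u + emb c)) = F (E r u)"
proof -
  have "mmul (memb (M2 1 c 0 1)) (M2 (fls_X ^ r) u 0 1) = M2 (fls_X ^ r) (u + emb c) 0 1"
    by (simp add: algebra_simps)
  thus ?thesis using HH_inv[OF assms Gamma0_transl, of "M2 (fls_X ^ r) u 0 1" c] by (simp add: E_def)
qed

lemma E_diag:
  assumes "F \<in> HH n" "l \<noteq> 0"
  shows "F (E r (fls_const l * u)) = F (E r u)"
proof -
  have eq: "mmul (memb (M2 [:l:] 0 0 1)) (M2 (fls_X ^ r) u 0 1) = mmul (M2 (fls_X ^ r) (fls_const l * u) 0 1) (M2 (fls_const l) 0 0 1)"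
    by (simp add: emb_pCons0 algebra_simps)
  have DI: "M2 (fls_const l) 0 0 1 \<in> Iwahori" using assms(2) by (simp add: Iwahori_iff Ounits_const)
  have "edgeOf (mmul (memb (M2 [:l:] 0 0 1)) (M2 (fls_X ^ r) u 0 1)) = E r (fls_const l * u)"
    unfolding eq edgeOf_right_Iw[OF DI] by (simp add: E_def)
  thus ?thesis using HH_inv[OF assms(1) Gamma0_diag[OF assms(2)], of "M2 (fls_X ^ r) u 0 1"] by (simp add: E_def)
qed

lemma E_shift: "y \<in> Oinf \<Longrightarrow> E r (u + fls_X ^ r * y) = E r u"
proof -
  assume y: "y \<in> Oinf"
  have "M2 (fls_X ^ r) (u + fls_X ^ r * y) 0 1 = mmul (M2 (fls_X ^ r) u 0 1) (M2 1 y 0 1)"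
    by (simp add: algebra_simps)
  moreover have "M2 1 y 0 1 \<in> Iwahori" using y by (simp add: Iwahori_iff Ounits_iff)
  ultimately show ?thesis unfolding E_def by (simp only: edgeOf_right_Iw)
qed

lemma E_opp_key:
  fixes n :: "'k::{finite,field} poly"
  assumes "F \<in> HH n" "lead_coeff n = 1"
  shows "F (E (Suc (degree n)) (- (fls_X ^ degree n))) = - F (E (degree n) 0)"
proof -
  let ?d = "degree n" and ?N = "emb n"
  let ?p = "?N * fls_X ^ ?d"
  have pn: "fls_nth ?p j = (if j \<le> int ?d then coeff n (nat (int ?d - j)) else 0)" for j
    by (simp add: fls_X_power_times_conv_shift emb_nth)
  have pO: "?p \<in> Oinf" unfolding Oinf_iff using pn by (auto simp: coeff_eq_0)
  have p0: "fls_nth ?p 0 = 1" using pn assms(2) by simp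
  have qpi: "1 - ?p \<in> piOinf" using pO p0 by (intro O_nth0_piO) simp_all
  define q where "q = fls_shift 1 (1 - ?p)"
  have qO: "q \<in> Oinf" unfolding q_def by (rule shift1_O[OF qpi])
  have Xq: "fls_X * q = 1 - ?p" unfolding q_def by (rule X_shift1)
  define k where "k = M2 ?p q fls_X (-1)"
  have dk: "?p * (-1) - q * fls_X = -1" using Xq by (simp add: algebra_simps)
  have kI: "k \<in> Iwahori" unfolding k_def Iwahori_iff dk using pO qO
    by (simp add: Ounits_iff)
  have e1: "mmul (memb (M2 1 0 n 1)) (M2 (fls_X ^ Suc ?d) (- (fls_X ^ ?d)) 0 1) =
            mmul (mmul (M2 (fls_X ^ ?d) 0 0 1) wmat) k"
    using Xq by (simp add: k_def wmat_def algebra_simps)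
  have "F (E (Suc ?d) (- (fls_X ^ ?d))) = F (edgeOf (mmul (memb (M2 1 0 n 1)) (M2 (fls_X ^ Suc ?d) (- (fls_X ^ ?d)) 0 1)))"
    using HH_inv[OF assms(1) Gamma0_low, of "M2 (fls_X ^ Suc ?d) (- (fls_X ^ ?d)) 0 1"] by (simp add: E_def)
  also have "\<dots> = F (opp (E ?d 0))"
    unfolding e1 edgeOf_right_Iw[OF kI] by (simp add: E_def opp_edgeOf)
  also have "\<dots> = - F (E ?d 0)" using HH_harmonic[OF assms(1)] E_Edges unfolding harmonic_def by blast
  finally show ?thesis .
qed



section \<open>Truncation sets\<close>

declare power_Suc [simp del]

lemma const_Xpow_nth: "fls_nth (fls_const c * fls_X ^ m) n = (if n = int m then c else 0)"
  by simp

lemma trunc_0: "trunc_set 0 = {0}"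
proof
  show "trunc_set 0 \<subseteq> {0}"
  proof
    fix u assume "u \<in> trunc_set 0"
    hence "\<forall>n. fls_nth u n = 0" by (force simp: trunc_set_def)
    hence "u = 0" by (intro fls_eqI) simp
    thus "u \<in> {0}" by simp
  qed
qed (simp add: trunc_set_def)

definition stp :: "nat \<Rightarrow> 'k::{finite,field} fls \<times> 'k \<Rightarrow> 'k fls" where
  "stp N = (\<lambda>(u,c). u + fls_const c * fls_X ^ Suc N)"

lemma trunc_Suc: "trunc_set (Suc N) = stp N ` (trunc_set N \<times> UNIV)"
proof
  show "trunc_set (Suc N) \<subseteq> stp N ` (trunc_set N \<times> UNIV)"
  proof
    fix v assume v: "v \<in> trunc_set (Suc N)"
    define c where "c = fls_nth v (int (Suc N))"
    define u where "u = v - fls_const c * fls_X ^ Suc N"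
    have "u \<in> trunc_set N"
      unfolding trunc_set_def
    proof (intro CollectI allI impI)
      fix n assume "fls_nth u n \<noteq> 0"
      hence "fls_nth v n \<noteq> 0" "n \<noteq> int (Suc N)" by (auto simp: u_def c_def split: if_splits)
      thus "1 \<le> n \<and> n \<le> int N" using v by (auto simp: trunc_set_def)
    qed
    moreover have "v = stp N (u, c)" by (simp add: stp_def u_def)
    ultimately show "v \<in> stp N ` (trunc_set N \<times> UNIV)" by blast
  qed
next
  show "stp N ` (trunc_set N \<times> UNIV) \<subseteq> trunc_set (Suc N)"
  proof
    fix v assume "v \<in> stp N ` (trunc_set N \<times> UNIV)"
    then obtain u c where u: "u \<in> trunc_set N" "v = u + fls_const c * fls_X ^ Suc N"
      by (auto simp: stp_def)
    show "v \<in> trunc_set (Suc N)"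
      unfolding trunc_set_def
    proof (intro CollectI allI impI)
      fix n assume "fls_nth v n \<noteq> 0"
      hence "fls_nth u n \<noteq> 0 \<or> n = int (Suc N)" using u(2) by (auto split: if_splits)
      thus "1 \<le> n \<and> n \<le> int (Suc N)" using u(1) by (auto simp: trunc_set_def)
    qed
  qed
qed

lemma stp_inj: "inj_on (stp N) (trunc_set N \<times> UNIV)"
proof (rule inj_onI, clarify)
  fix u c u' c' assume h: "u \<in> trunc_set N" "u' \<in> trunc_set N" "stp N (u, c) = stp N (u', c')"
  have "fls_nth u (int (Suc N)) = 0" "fls_nth u' (int (Suc N)) = 0" using h(1,2) by (force simp: trunc_set_def)+
  moreover have "fls_nth (stp N (u, c)) (int (Suc N)) = fls_nth (stp N (u', c')) (int (Suc N))" using h(3) by simp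
  ultimately have cc: "c = c'" by (simp add: stp_def)
  hence "u = u'" using h(3) by (simp add: stp_def)
  thus "u = u' \<and> c = c'" using cc by simp
qed

lemma finite_trunc: "finite (trunc_set N :: 'k::{finite,field} fls set)"
  by (induction N) (simp_all add: trunc_0 trunc_Suc)

lemma sum_trunc_Suc:
  "(\<Sum>v\<in>trunc_set (Suc N). h v) = (\<Sum>u\<in>trunc_set N. \<Sum>c\<in>UNIV. h (u + fls_const c * fls_X ^ Suc N))"
proof -
  have "(\<Sum>v\<in>trunc_set (Suc N). h v) = (\<Sum>x\<in>trunc_set N \<times> UNIV. h (stp N x))"
    unfolding trunc_Suc by (rule sum.reindex[OF stp_inj, unfolded comp_def])
  also have "\<dots> = (\<Sum>u\<in>trunc_set N. \<Sum>c\<in>UNIV. h (stp N (u, c)))"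
    by (simp add: sum.cartesian_product case_prod_unfold)
  finally show ?thesis by (simp add: stp_def)
qed

lemma trunc_scale: "u \<in> trunc_set N \<Longrightarrow> fls_const l * u \<in> trunc_set N"
  by (auto simp: trunc_set_def)
lemma trunc_diff: "u \<in> trunc_set N \<Longrightarrow> v \<in> trunc_set N \<Longrightarrow> u - v \<in> trunc_set N"
  unfolding trunc_set_def by (auto) (metis diff_zero)+
lemma trunc_const_Xpow: "1 \<le> N \<Longrightarrow> fls_const c * fls_X ^ N \<in> trunc_set N"
  by (auto simp: trunc_set_def split: if_splits)
lemma trunc_neg_Xpow: "1 \<le> N \<Longrightarrow> - (fls_X ^ N) \<in> trunc_set N"
  by (auto simp: trunc_set_def split: if_splits)
lemma trunc_0_mem: "0 \<in> trunc_set N" by (simp add: trunc_set_def)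

lemma trunc_scale_image:
  fixes l :: "'k::{finite,field}"
  shows "l \<noteq> 0 \<Longrightarrow> (\<lambda>u. fls_const l * u) ` trunc_set N = trunc_set N"
proof
  assume l: "l \<noteq> 0"
  show "trunc_set N \<subseteq> (\<lambda>u. fls_const l * u) ` trunc_set N"
  proof
    fix v :: "'k fls" assume v: "v \<in> trunc_set N"
    have "v = fls_const l * (fls_const (inverse l) * v)"
      using l by (simp add: mult.assoc[symmetric] fls_const_mult_const[symmetric])
    moreover have "fls_const (inverse l) * v \<in> trunc_set N" using v by (rule trunc_scale)
    ultimately show "v \<in> (\<lambda>u. fls_const l * u) ` trunc_set N" by blast
  qed
qed (auto intro: trunc_scale)

section \<open>Haar integral of locally constant functions\<close>

lemma haar_eq:
  fixes h :: "'k::{finite,field} fls \<Rightarrow> complex"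
  assumes inv: "\<And>N u c. N \<ge> N0 \<Longrightarrow> u \<in> trunc_set N \<Longrightarrow> h (u + fls_const c * fls_X ^ Suc N) = h u"
  shows "haar h = (\<Sum>u\<in>trunc_set N0. h u) / of_nat (CARD('k) ^ N0)"
proof -
  define s where "s N = (\<Sum>u\<in>trunc_set N. h u) / of_nat (CARD('k) ^ N)" for N
  have q0: "(of_nat CARD('k) :: complex) \<noteq> 0" by simp
  have stpeq: "s (Suc N) = s N" if "N \<ge> N0" for N
  proof -
    have "(\<Sum>v\<in>trunc_set (Suc N). h v) = (\<Sum>u\<in>trunc_set N. \<Sum>c\<in>(UNIV::'k set). h u)"
      unfolding sum_trunc_Suc using inv[OF that] by simp
    also have "\<dots> = of_nat CARD('k) * (\<Sum>u\<in>trunc_set N. h u)"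
      by (simp add: sum_distrib_left)
    finally show ?thesis unfolding s_def using q0 by (simp add: field_simps power_Suc)
  qed
  have const: "s N = s N0" if "N \<ge> N0" for N
    using that
  proof (induction N rule: dec_induct)
    case (step N) thus ?case using stpeq[of N] by simp
  qed simp
  have "s \<longlonglongrightarrow> s N0"
    by (rule tendsto_eventually) (auto simp: eventually_sequentially intro: exI[of _ N0] const)
  hence "lim s = s N0" by (rule limI)
  thus ?thesis unfolding haar_def s_def by simp
qed

declare power_Suc [simp]



section \<open>Character psi\<close>

lemma psi_add: "psi (x + y) = psi x * psi (y :: 'k::{finite,field} fls)"
  by (simp add: psi_Psi Psi_add)

lemma psi_zero: "psi (0 :: 'k::{finite,field} fls) = 1"
  by (simp add: psi_Psi Psi_0)

lemma psi_nth1: "fls_nth x 1 = fls_nth y 1 \<Longrightarrow> psi x = psi (y :: 'k::{finite,field} fls)"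
  by (simp add: psi_Psi)

lemma psi_shift:
  fixes m :: "'k::{finite,field} poly"
  assumes "coeff m N = 0"
  shows "psi (- (emb m * (u + fls_const c * fls_X ^ Suc N))) = psi (- (emb m * u))"
proof (rule psi_nth1)
  have "fls_nth (emb m * (fls_const c * fls_X ^ Suc N)) 1 = c * fls_nth (emb m * fls_X ^ Suc N) 1"
    by (simp add: mult.left_commute[of "emb m"] del: power_Suc)
  also have "\<dots> = c * coeff m N" by (simp add: emb_mult_Xpow_nth emb_nth del: power_Suc)
  finally have "fls_nth (emb m * (fls_const c * fls_X ^ Suc N)) 1 = 0" using assms by simp
  thus "fls_nth (- (emb m * (u + fls_const c * fls_X ^ Suc N))) 1 = fls_nth (- (emb m * u)) 1"
    by (simp add: distrib_left del: power_Suc)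
qed

lemma E_shift2:
  fixes c :: "'k::field"
  assumes "L \<le> N"
  shows "E (Suc L) (u + fls_const c * fls_X ^ Suc N) = E (Suc L) u"
proof -
  have "(fls_X :: 'k fls) ^ Suc N = fls_X ^ Suc L * fls_X ^ (N - L)"
    using assms by (simp add: power_add[symmetric] del: power_Suc)
  hence eq: "u + fls_const c * fls_X ^ Suc N = u + fls_X ^ Suc L * (fls_const c * fls_X ^ (N - L))"
    by (simp add: algebra_simps del: power_Suc)
  have y: "fls_const c * fls_X ^ (N - L) \<in> Oinf" by simp
  show ?thesis unfolding eq by (rule E_shift[OF y])
qed

section \<open>Finite Fourier sums\<close>

definition S :: "('k::{finite,field} fls mat2 set \<Rightarrow> complex) \<Rightarrow> nat \<Rightarrow> 'k poly \<Rightarrow> complex" where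
  "S F L m = (\<Sum>u\<in>trunc_set L. F (E (Suc L) u) * psi (- (emb m * u)))"

lemma fstar_S:
  fixes F :: "'k::{finite,field} fls mat2 set \<Rightarrow> complex"
  assumes "\<And>N. N \<ge> L \<Longrightarrow> coeff m N = 0"
  shows "fstar F (Suc L) m = S F L m / of_nat (CARD('k) ^ L)"
proof -
  have "fstar F (Suc L) m = haar (\<lambda>u. F (E (Suc L) u) * psi (- (emb m * u)))"
    by (simp add: fstar_def fval_def E_def)
  also have "\<dots> = S F L m / of_nat (CARD('k) ^ L)"
    unfolding S_def
    by (rule haar_eq) (simp add: E_shift2 psi_shift assms del: power_Suc)
  finally show ?thesis .
qed

lemma c0_S:
  fixes F :: "'k::{finite,field} fls mat2 set \<Rightarrow> complex"
  shows "c0 F = S F 1 0 / of_nat CARD('k)"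
  using fstar_S[of 1 0 F] by (simp add: c0_def numeral_2_eq_2)

lemma cm_S:
  fixes F :: "'k::{finite,field} fls mat2 set \<Rightarrow> complex"
  shows "cm F m = S F (Suc (degree m)) m / of_nat CARD('k)"
proof -
  have "fstar F (Suc (Suc (degree m))) m = S F (Suc (degree m)) m / of_nat (CARD('k) ^ Suc (degree m))"
    by (rule fstar_S) (simp add: coeff_eq_0)
  moreover have "degree m + 2 = Suc (Suc (degree m))" by simp
  ultimately show ?thesis unfolding cm_def by (simp add: field_simps)
qed

lemma S_level_step:
  fixes F :: "'k::{finite,field} fls mat2 set \<Rightarrow> complex"
  assumes "harmonic F" "coeff m L = 0"
  shows "S F (Suc L) m = S F L m"
proof -
  have "S F L m = (\<Sum>u\<in>trunc_set L. (\<Sum>b\<in>UNIV. F (E (Suc (Suc L)) (u + fls_const b * fls_X ^ Suc L))) * psi (- (emb m * u)))"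
    unfolding S_def by (simp only: harm_E[OF assms(1), of "Suc L"])
  also have "\<dots> = (\<Sum>u\<in>trunc_set L. \<Sum>b\<in>UNIV. F (E (Suc (Suc L)) (u + fls_const b * fls_X ^ Suc L)) *
       psi (- (emb m * (u + fls_const b * fls_X ^ Suc L))))"
    by (simp add: sum_distrib_right psi_shift[OF assms(2)] del: power_Suc)
  also have "\<dots> = S F (Suc L) m"
    unfolding S_def sum_trunc_Suc ..
  finally show ?thesis by simp
qed

lemma S_level:
  fixes F :: "'k::{finite,field} fls mat2 set \<Rightarrow> complex"
  assumes "harmonic F" "\<And>N. N \<ge> L0 \<Longrightarrow> coeff m N = 0" "L0 \<le> L"
  shows "S F L m = S F L0 m"
  using assms(3)
proof (induction L rule: dec_induct)
  case (step L)
  thus ?case using S_level_step[OF assms(1) assms(2)[of L]] by simp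
qed simp

lemma S_scale:
  fixes F :: "'k::{finite,field} fls mat2 set \<Rightarrow> complex"
  assumes "F \<in> HH n" "l \<noteq> 0"
  shows "S F L (smult l m) = S F L m"
proof -
  have "S F L (smult l m) = (\<Sum>u\<in>trunc_set L. F (E (Suc L) (fls_const l * u)) * psi (- (emb m * (fls_const l * u))))"
    unfolding S_def by (simp only: emb_smult E_diag[OF assms]) (simp add: mult_ac)
  also have "\<dots> = (\<Sum>u\<in>(\<lambda>u. fls_const l * u) ` trunc_set L. F (E (Suc L) u) * psi (- (emb m * u)))"
    by (rule sum.reindex[symmetric, unfolded comp_def]) (use assms(2) in \<open>auto intro: inj_onI\<close>)
  also have "\<dots> = S F L m" unfolding S_def trunc_scale_image[OF assms(2)] ..
  finally show ?thesis .
qed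



definition PP :: "nat \<Rightarrow> 'k::{finite,field} poly set" where
  "PP D = {m. \<forall>k\<ge>D. coeff m k = 0}"

lemma PP_Poly: "m \<in> PP D \<Longrightarrow> m = Poly (map (coeff m) [0..<D])"
proof (rule poly_eqI)
  fix k assume "m \<in> PP D"
  thus "coeff m k = coeff (Poly (map (coeff m) [0..<D])) k"
    by (cases "k < D") (auto simp: PP_def coeff_Poly_eq nth_default_def)
qed

lemma finite_PP: "finite (PP D :: 'k::{finite,field} poly set)"
proof -
  have "PP D \<subseteq> Poly ` {xs. set xs \<subseteq> (UNIV :: 'k set) \<and> length xs = D}"
  proof
    fix m :: "'k poly" assume "m \<in> PP D"
    hence "m = Poly (map (coeff m) [0..<D])" by (rule PP_Poly)
    moreover have "map (coeff m) [0..<D] \<in> {xs. set xs \<subseteq> (UNIV :: 'k set) \<and> length xs = D}" by simp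
    ultimately show "m \<in> Poly ` {xs. set xs \<subseteq> (UNIV :: 'k set) \<and> length xs = D}" by blast
  qed
  moreover have "finite (Poly ` {xs. set xs \<subseteq> (UNIV :: 'k set) \<and> length xs = D})"
    by (intro finite_imageI finite_lists_length_eq) simp
  ultimately show ?thesis by (rule finite_subset)
qed

lemma zero_PP: "0 \<in> PP D" by (simp add: PP_def)
lemma PP_add: "a \<in> PP D \<Longrightarrow> b \<in> PP D \<Longrightarrow> a + b \<in> PP D" by (simp add: PP_def)
lemma PP_diff: "a \<in> PP D \<Longrightarrow> b \<in> PP D \<Longrightarrow> a - b \<in> PP D" by (simp add: PP_def)
lemma monom_PP: "k < D \<Longrightarrow> monom c k \<in> PP D" by (simp add: PP_def coeff_monom)
lemma card_PP_pos: "card (PP D :: 'k::{finite,field} poly set) \<noteq> 0"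
  using finite_PP[where 'k='k] zero_PP by (auto simp: card_eq_0_iff)

lemma PP_degree: "m \<in> PP D \<Longrightarrow> m \<noteq> 0 \<Longrightarrow> degree m < D"
proof (rule ccontr)
  assume h: "m \<in> PP D" "m \<noteq> 0" "\<not> degree m < D"
  hence "coeff m (degree m) = 0" by (simp add: PP_def)
  thus False using h(2) by simp
qed

lemma psi_emb_add: "psi (emb (a + b) * w) = psi (emb a * w) * psi (emb b * (w :: 'k::{finite,field} fls))"
  by (simp add: emb_add distrib_right psi_add)

lemma char_sum_nz:
  fixes w :: "'k::{finite,field} fls"
  assumes w: "w \<in> trunc_set D" "w \<noteq> 0"
  shows "(\<Sum>m\<in>PP D. psi (emb m * w)) = 0"
proof -
  obtain j where j: "fls_nth w j \<noteq> 0"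
  proof -
    have "\<not> (\<forall>j. fls_nth w j = 0)"
    proof
      assume "\<forall>j. fls_nth w j = 0"
      hence "w = 0" by (intro fls_eqI) simp
      thus False using w(2) by simp
    qed
    thus ?thesis using that by blast
  qed
  have jr: "1 \<le> j" "j \<le> int D" using w(1) j by (auto simp: trunc_set_def)
  obtain a :: 'k where a: "Psi a \<noteq> 1" using Psi_nontrivial by blast
  define k where "k = nat (j - 1)"
  have k: "k < D" "1 + int k = j" using jr by (auto simp: k_def)
  define m0 where "m0 = monom (a / fls_nth w j) k"
  have m0P: "m0 \<in> PP D" unfolding m0_def using k(1) by (rule monom_PP)
  have pm0: "psi (emb m0 * w) = Psi a"
    unfolding m0_def psi_Psi emb_monom_mult_nth1 k(2) using j by simp
  let ?s = "\<Sum>m\<in>PP D. psi (emb m * w)"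
  have "(\<Sum>m\<in>PP D. psi (emb (m + m0) * w)) = ?s"
    by (rule sum.reindex_bij_witness[of _ "\<lambda>m. m - m0" "\<lambda>m. m + m0"])
       (auto intro: PP_add PP_diff m0P)
  moreover have "(\<Sum>m\<in>PP D. psi (emb (m + m0) * w)) = ?s * Psi a"
    by (simp only: psi_emb_add pm0 sum_distrib_right)
  ultimately have "(1 - Psi a) * ?s = 0" by (simp add: algebra_simps)
  thus ?thesis using a by simp
qed

lemma fourier:
  fixes F :: "'k::{finite,field} fls mat2 set \<Rightarrow> complex"
  assumes A: "\<And>m. m \<in> PP D \<Longrightarrow> m \<noteq> 0 \<Longrightarrow> S F D m = 0" and u0: "u0 \<in> trunc_set D"
  shows "of_nat (card (PP D :: 'k poly set)) * F (E (Suc D) u0) = S F D 0"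
proof -
  let ?P = "PP D :: 'k poly set"
  have L: "(\<Sum>m\<in>?P. psi (emb m * u0) * S F D m) = S F D 0"
  proof -
    have "(\<Sum>m\<in>?P. psi (emb m * u0) * S F D m) = psi (emb 0 * u0) * S F D 0 + (\<Sum>m\<in>?P - {0}. psi (emb m * u0) * S F D m)"
      by (rule sum.remove[OF finite_PP zero_PP])
    also have "(\<Sum>m\<in>?P - {0}. psi (emb m * u0) * S F D m) = 0"
    proof (rule sum.neutral, rule ballI)
      fix m assume "m \<in> ?P - {0}"
      hence "S F D m = 0" using A by blast
      thus "psi (emb m * u0) * S F D m = 0" by simp
    qed
    finally show ?thesis by (simp add: psi_zero)
  qed
  have cs: "(\<Sum>m\<in>?P. psi (emb m * (u0 - u))) = (if u = u0 then of_nat (card ?P) else 0)"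
    if "u \<in> trunc_set D" for u
  proof (cases "u = u0")
    case True thus ?thesis by (simp add: psi_zero)
  next
    case False
    hence "u0 - u \<noteq> 0" by simp
    thus ?thesis using char_sum_nz[OF trunc_diff[OF u0 that]] False by simp
  qed
  have "(\<Sum>m\<in>?P. psi (emb m * u0) * S F D m) =
        (\<Sum>m\<in>?P. \<Sum>u\<in>trunc_set D. F (E (Suc D) u) * psi (emb m * (u0 - u)))"
  proof (rule sum.cong[OF refl])
    fix m
    have "psi (emb m * u0) * S F D m = (\<Sum>u\<in>trunc_set D. F (E (Suc D) u) * (psi (emb m * u0) * psi (- (emb m * u))))"
      unfolding S_def by (simp add: sum_distrib_left mult_ac)
    also have "\<dots> = (\<Sum>u\<in>trunc_set D. F (E (Suc D) u) * psi (emb m * (u0 - u)))"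
      by (simp add: psi_add[symmetric] right_diff_distrib)
    finally show "psi (emb m * u0) * S F D m = (\<Sum>u\<in>trunc_set D. F (E (Suc D) u) * psi (emb m * (u0 - u)))" .
  qed
  also have "\<dots> = (\<Sum>u\<in>trunc_set D. \<Sum>m\<in>?P. F (E (Suc D) u) * psi (emb m * (u0 - u)))"
    by (rule sum.swap)
  also have "\<dots> = (\<Sum>u\<in>trunc_set D. F (E (Suc D) u) * (if u = u0 then of_nat (card ?P) else 0))"
    by (rule sum.cong[OF refl]) (simp add: sum_distrib_left[symmetric] cs)
  also have "\<dots> = (\<Sum>u\<in>trunc_set D. if u = u0 then F (E (Suc D) u) * of_nat (card ?P) else 0)"
    by (rule sum.cong[OF refl]) simp
  also have "\<dots> = F (E (Suc D) u0) * of_nat (card ?P)"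
    using u0 by (simp add: sum.delta[OF finite_trunc])
  finally show ?thesis using L by (simp add: mult.commute)
qed



lemma cancel_1q: "x = - (of_nat q * x) \<Longrightarrow> (x::complex) = 0"
proof -
  assume "x = - (of_nat q * x)"
  hence h: "x + of_nat q * x = 0" by (simp only: eq_neg_iff_add_eq_0)
  have "(1 + of_nat q) * x = x + of_nat q * x" by (simp add: distrib_right)
  hence "(1 + of_nat q) * x = 0" using h by simp
  moreover have "(1 + of_nat q :: complex) \<noteq> 0"
    by (metis of_nat_Suc of_nat_eq_0_iff Suc_neq_Zero add.commute)
  ultimately show ?thesis by simp
qed

theorem lemma4p8:
  fixes n :: "'k::{finite,field} poly"
    and F :: "'k fls mat2 set \<Rightarrow> complex"
  assumes "lead_coeff n = 1"
    and "F \<in> HH n"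
    and "\<forall>m. lead_coeff m = 1 \<and> degree m < degree n \<longrightarrow> cm F m = 0"
  shows "c0 F = 0"
proof -
  define d where "d = degree n"
  have harm: "harmonic F" using assms(2) by (rule HH_harmonic)
  have q0: "(of_nat CARD('k) :: complex) \<noteq> 0" by simp
  have S0: "S F L 0 = S F 0 0" for L using S_level[OF harm, of 0 0 L] by simp
  have A: "S F d m = 0" if m: "m \<in> PP d" "m \<noteq> 0" for m
  proof -
    define l where "l = lead_coeff m"
    have l: "l \<noteq> 0" using m(2) by (simp add: l_def)
    define m1 where "m1 = smult (inverse l) m"
    have m1: "lead_coeff m1 = 1" "degree m1 = degree m" using l by (simp_all add: m1_def l_def)
    have mm: "m = smult l m1" using l by (simp add: m1_def)
    have dm: "degree m1 < d" using PP_degree[OF m] m1 by simp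
    have "cm F m1 = 0" using assms(3) m1(1) dm by (simp add: d_def)
    hence z: "S F (Suc (degree m1)) m1 = 0" using q0 by (simp add: cm_S)
    have "S F d m1 = S F (Suc (degree m1)) m1"
      by (rule S_level[OF harm]) (use dm in \<open>auto simp: coeff_eq_0\<close>)
    moreover have "S F d m = S F d m1" unfolding mm by (rule S_scale[OF assms(2) l])
    ultimately show ?thesis using z by simp
  qed
  have G: "of_nat (card (PP d :: 'k poly set)) * F (E (Suc d) u) = S F d 0" if "u \<in> trunc_set d" for u
    by (rule fourier[OF A that])
  have key: "F (E (Suc d) (- (fls_X ^ d))) = - F (E d 0)" using E_opp_key[OF assms(2,1)] by (simp add: d_def)
  have harm0: "F (E d 0) = (\<Sum>b\<in>UNIV. F (E (Suc d) (0 + fls_const b * fls_X ^ d)))" by (rule harm_E[OF harm])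
  have S00: "S F 0 0 = F (E 1 0)" by (simp add: S_def trunc_0 psi_zero)
  have Sd: "S F d 0 = 0"
  proof (cases "d = 0")
    case True
    have e1: "F (E 1 (fls_const b)) = F (E 1 0)" for b
      using E_transl[OF assms(2), of 1 0 "[:b:]"] by (simp add: emb_pCons0)
    have e2: "F (E 1 (-1)) = F (E 1 0)"
      using E_transl[OF assms(2), of 1 "-1" 1] by simp
    have "F (E 1 0) = - (of_nat CARD('k) * F (E 1 0))"
      using key harm0 True e1 e2 by simp
    hence "F (E 1 0) = 0" by (rule cancel_1q)
    thus ?thesis using S0[of d] S00 by simp
  next
    case False
    hence d1: "1 \<le> d" by simp
    let ?c = "of_nat (card (PP d :: 'k poly set)) :: complex"
    have c0: "?c \<noteq> 0" using card_PP_pos[where 'k='k] by simp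
    define G0 where "G0 = S F d 0 / ?c"
    have Gv: "F (E (Suc d) u) = G0" if "u \<in> trunc_set d" for u
      using G[OF that] c0 by (simp add: G0_def field_simps)
    have "(\<Sum>b\<in>UNIV. F (E (Suc d) (0 + fls_const b * fls_X ^ d))) = (\<Sum>b\<in>(UNIV::'k set). G0)"
    proof (rule sum.cong[OF refl])
      fix b :: 'k
      have "0 + fls_const b * fls_X ^ d \<in> trunc_set d" using trunc_const_Xpow[OF d1, of b] by simp
      thus "F (E (Suc d) (0 + fls_const b * fls_X ^ d)) = G0" by (rule Gv)
    qed
    hence "F (E d 0) = (\<Sum>b\<in>(UNIV::'k set). G0)" using harm0 by simp
    hence "F (E d 0) = of_nat CARD('k) * G0" by simp
    moreover have "F (E (Suc d) (- (fls_X ^ d))) = G0" by (rule Gv[OF trunc_neg_Xpow[OF d1]])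
    ultimately have "G0 = - (of_nat CARD('k) * G0)" using key by simp
    hence "G0 = 0" by (rule cancel_1q)
    thus ?thesis using c0 by (simp add: G0_def)
  qed
  have "c0 F = S F 1 0 / of_nat CARD('k)" by (rule c0_S)
  also have "S F 1 0 = S F d 0" using S0[of 1] S0[of d] by simp
  finally show ?thesis using Sd by simp
qed

end
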